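(* Let $(\mathcal C,\Delta,\delta,\beta,* )$ be a braided $*$-coalgebra and let $K,L:\mathcal C\otimes\mathcal C\to\mathbb C$ be hermitian linear functionals. If $K$ is $\beta$-invariant or $L$ is $\beta^{-1}$-invariant, then the convolution $K\star L=(K\otimes L)\circ\Lambda$ is hermitian as well.
   Context: A braided vector space is a pair $(V,\beta)$, $V$ a complex vector space, $\beta\in\mathrm{Aut}(V\otimes V)$ with $(\beta\otimes\mathrm{id})(\mathrm{id}\otimes\beta)(\beta\otimes\mathrm{id})=(\mathrm{id}\otimes\beta)(\beta\otimes\mathrm{id})(\mathrm{id}\otimes\beta)$ ($\beta^2=\mathrm{id}$ is not assumed). Define $\beta_{m,n}:V^{\otimes m}\otimes V^{\otimes n}\to V^{\otimes n}\otimes V^{\otimes m}$ by $\beta_{0,0}=\mathrm{id}_{\mathbb C}$, $\beta_{1,0}=\beta_{0,1}=\mathrm{id}_V$, $\beta_{1,m+1}=(\mathrm{id}_V\otimes\beta_{1,m})(\beta\otimes\mathrm{id}_{V^{\otimes m}})$, $\beta_{n+1,m}=(\beta_{n,m}\otimes\mathrm{id}_V)(\mathrm{id}_{V^{\otimes n}}\otimes\beta_{1,m})$ (with $V^{\otimes0}=\mathbb C$ identified away in tensor products). A linear map $f:V^{\otimes m}\to V^{\otimes n}$ is $\beta$-invariant if $(f\otimes\mathrm{id})\circ\beta_{1,m}=\beta_{1,n}\circ(\mathrm{id}\otimes f)$, $\beta^{-1}$-invariant if $(\mathrm{id}\otimes f)\circ\beta_{m,1}=\beta_{n,1}\circ(f\otimes\mathrm{id})$,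 and $\beta$-compatible if both hold. In particular a functional $K$ on $V\otimes V$ is $\beta$-invariant iff $(K\otimes\mathrm{id})\circ\beta_{1,2}=\mathrm{id}\otimes K$ and $\beta^{-1}$-invariant iff $(\mathrm{id}\otimes K)\circ\beta_{2,1}=K\otimes\mathrm{id}$ on $V^{\otimes 3}$. A braided coalgebra $(\mathcal C,\Delta,\delta,\beta)$ is a coassociative counital coalgebra with a braiding $\beta$ on $\mathcal C$ such that $\Delta$ and $\delta$ are $\beta$-compatible. Set $\Lambda:=(\mathrm{id}\otimes\beta\otimes\mathrm{id})\circ(\Delta\otimes\Delta)$, the comultiplication of $\mathcal C\otimes\mathcal C$ (with counit $\delta\otimes\delta$). A braided $*$-coalgebra is a braided coalgebra with an antilinear involution $*$ on $\mathcal C$ such that $\Delta\circ *=\beta\circ( *\otimes* )\circ\tau\circ\Delta$, $\delta(c^* )=\overline{\delta(c)}$, and $\beta\circ( *\otimes* )\circ\tau=( *\otimes* )\circ\tau\circ\beta^{-1}$, where $\tau(a\otimes b)=b\otimes a$ is the flip. A linear functional $K$ on $\mathcal C\otimes\mathcal C$ is hermitian if $K(a^*\otimes b^* )=\overline{K(b\otimes a)}$ for all $a,b\in\mathcal C$. *)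

theory Defs
  imports Complex_Main "HOL-Library.Quotient_List"
begin

text \<open>
Complex vector spaces (there is no complex_vector class in the distribution, so we
introduce one), the tensor algebra T(V) over a complex vector space V (realised as
formal linear combinations of words v1 v2 ... vn, identified when all multilinear
scalar forms agree on them, i.e. T(V) embedded in the algebraic dual of the space of
multilinear forms), its graded pieces Tn n = V^(tensor n), tensor products of linear
maps between graded pieces, and the braided *-coalgebra notions of the paper.
Tn 0 is identified with the scalars via tw [] (the unit of T(V)).
\<close>


class scaleC = fixes scaleC :: "complex \<Rightarrow> 'a \<Rightarrow> 'a" (infixr "*\<^sub>C" 75)

class complex_vector = scaleC + ab_group_add +
  assumes scaleC_add_right: "a *\<^sub>C (x + y) = a *\<^sub>C x + a *\<^sub>C y"
    and scaleC_add_left: "(a + b) *\<^sub>C x = a *\<^sub>C x + b *\<^sub>C x"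
    and scaleC_scaleC: "a *\<^sub>C (b *\<^sub>C x) = (a * b) *\<^sub>C x"
    and scaleC_one: "1 *\<^sub>C x = x"

definition mlin :: "('v::complex_vector list \<Rightarrow> complex) \<Rightarrow> bool" where
  "mlin \<phi> \<longleftrightarrow> (\<forall>us ws a x y. \<phi> (us @ (a *\<^sub>C x + y) # ws) = a * \<phi> (us @ x # ws) + \<phi> (us @ y # ws))"

definition tsum :: "('v list \<Rightarrow> complex) \<Rightarrow> (complex \<times> 'v list) list \<Rightarrow> complex" where
  "tsum \<phi> xs = sum_list (map (\<lambda>(c, w). c * \<phi> w) xs)"

definition teq :: "(complex \<times> 'v::complex_vector list) list \<Rightarrow> (complex \<times> 'v list) list \<Rightarrow> bool" where
  "teq xs ys \<longleftrightarrow> (\<forall>\<phi>. mlin \<phi> \<longrightarrow> tsum \<phi> xs = tsum \<phi> ys)"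

quotient_type (overloaded) 'v tens = "(complex \<times> 'v::complex_vector list) list" / teq
  by (auto intro!: equivpI reflpI sympI transpI simp: teq_def)

definition sc_list :: "complex \<Rightarrow> (complex \<times> 'v list) list \<Rightarrow> (complex \<times> 'v list) list" where
  "sc_list a xs = map (\<lambda>(c, w). (a * c, w)) xs"

lemma tsum_append[simp]: "tsum \<phi> (xs @ ys) = tsum \<phi> xs + tsum \<phi> ys"
  by (simp add: tsum_def)
lemma tsum_sc[simp]: "tsum \<phi> (sc_list a xs) = a * tsum \<phi> xs"
  by (induct xs) (auto simp: tsum_def sc_list_def algebra_simps)
lemma tsum_Nil[simp]: "tsum \<phi> [] = 0" by (simp add: tsum_def)

instantiation tens :: (complex_vector) complex_vector
begin
lift_definition zero_tens :: "'a tens" is "[]" .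
lift_definition plus_tens :: "'a tens \<Rightarrow> 'a tens \<Rightarrow> 'a tens" is "(@)"
  by (simp add: teq_def)
lift_definition scaleC_tens :: "complex \<Rightarrow> 'a tens \<Rightarrow> 'a tens" is sc_list
  by (simp add: teq_def)
lift_definition uminus_tens :: "'a tens \<Rightarrow> 'a tens" is "sc_list (-1)"
  by (simp add: teq_def)
lift_definition minus_tens :: "'a tens \<Rightarrow> 'a tens \<Rightarrow> 'a tens" is "\<lambda>xs ys. xs @ sc_list (-1) ys"
  by (simp add: teq_def)
instance
proof
  fix a b c :: "'a tens" and r s :: complex
  show "a + b + c = a + (b + c)" by transfer (simp add: teq_def)
  show "a + b = b + a" by transfer (simp add: teq_def)
  show "0 + a = a" by transfer (simp add: teq_def)
  show "- a + a = 0" by transfer (simp add: teq_def)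
  show "a - b = a + - b" by transfer (simp add: teq_def)
  show "r *\<^sub>C (a + b) = r *\<^sub>C a + r *\<^sub>C b" by transfer (simp add: teq_def sc_list_def)
  show "(r + s) *\<^sub>C a = r *\<^sub>C a + s *\<^sub>C a" by transfer (simp add: teq_def algebra_simps)
  show "r *\<^sub>C (s *\<^sub>C a) = (r * s) *\<^sub>C a" by transfer (simp add: teq_def)
  show "1 *\<^sub>C a = a" by transfer (simp add: teq_def)
qed
end

instantiation complex :: complex_vector
begin
definition scaleC_complex :: "complex \<Rightarrow> complex \<Rightarrow> complex" where "scaleC_complex = (*)"
instance by standard (auto simp: scaleC_complex_def algebra_simps)
end

definition cat_list :: "(complex \<times> 'v list) list \<Rightarrow> (complex \<times> 'v list) list \<Rightarrow> (complex \<times> 'v list) list" where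
  "cat_list xs ys = concat (map (\<lambda>(c, u). map (\<lambda>(d, w). (c * d, u @ w)) ys) xs)"

lemma tsum_cat_list: "tsum \<phi> (cat_list xs ys) = tsum (\<lambda>u. tsum (\<lambda>w. \<phi> (u @ w)) ys) xs"
proof (induct xs)
  case Nil then show ?case by (simp add: cat_list_def)
next
  case (Cons p xs)
  obtain c u where p: "p = (c, u)" by (cases p)
  have "tsum \<phi> (map (\<lambda>(d, w). (c * d, u @ w)) ys) = c * tsum (\<lambda>w. \<phi> (u @ w)) ys"
    by (induct ys) (auto simp: tsum_def algebra_simps)
  with Cons show ?case by (simp add: cat_list_def p tsum_def)
qed

lemma mlin_tsum: "mlin \<phi> \<Longrightarrow> mlin (\<lambda>u. tsum (\<lambda>w. \<phi> (u @ w)) ys)"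
  unfolding mlin_def
proof (intro allI)
  fix us ws a x y assume m: "\<forall>us ws a x y. \<phi> (us @ (a *\<^sub>C x + y) # ws) = a * \<phi> (us @ x # ws) + \<phi> (us @ y # ws)"
  show "tsum (\<lambda>w. \<phi> ((us @ (a *\<^sub>C x + y) # ws) @ w)) ys = a * tsum (\<lambda>w. \<phi> ((us @ x # ws) @ w)) ys + tsum (\<lambda>w. \<phi> ((us @ y # ws) @ w)) ys"
    using m by (induct ys) (auto simp: tsum_def algebra_simps)
qed

lemma mlin_app: "mlin \<phi> \<Longrightarrow> mlin (\<lambda>w. \<phi> (u @ w))"
  unfolding mlin_def by (metis append.assoc)

lemma tsum_cong_inner: "(\<And>u. f u = g u) \<Longrightarrow> tsum f xs = tsum g xs"
  by (metis ext)

lift_definition tmul :: "'v::complex_vector tens \<Rightarrow> 'v tens \<Rightarrow> 'v tens" is cat_list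
proof -
  fix xs xs' ys ys' :: "(complex \<times> 'v list) list"
  assume 1: "teq xs xs'" and 2: "teq ys ys'"
  show "teq (cat_list xs ys) (cat_list xs' ys')"
    unfolding teq_def
  proof (intro allI impI)
    fix \<phi> :: "'v list \<Rightarrow> complex" assume m: "mlin \<phi>"
    have "tsum \<phi> (cat_list xs ys) = tsum (\<lambda>u. tsum (\<lambda>w. \<phi> (u @ w)) ys) xs" by (rule tsum_cat_list)
    also have "\<dots> = tsum (\<lambda>u. tsum (\<lambda>w. \<phi> (u @ w)) ys) xs'"
      using 1 mlin_tsum[OF m] unfolding teq_def by blast
    also have "\<dots> = tsum (\<lambda>u. tsum (\<lambda>w. \<phi> (u @ w)) ys') xs'"
      using 2 mlin_app[OF m] unfolding teq_def by (metis (no_types))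
    also have "\<dots> = tsum \<phi> (cat_list xs' ys')" by (rule tsum_cat_list[symmetric])
    finally show "tsum \<phi> (cat_list xs ys) = tsum \<phi> (cat_list xs' ys')" .
  qed
qed


definition tw :: "'v::complex_vector list \<Rightarrow> 'v tens" where
  "tw vs = abs_tens [(1, vs)]"

definition Tn :: "nat \<Rightarrow> 'v::complex_vector tens set" where
  "Tn n = {abs_tens xs | xs. \<forall>p\<in>set xs. length (snd p) = n}"

definition lin_on :: "'a::complex_vector set \<Rightarrow> ('a \<Rightarrow> 'b::complex_vector) \<Rightarrow> bool" where
  "lin_on S f \<longleftrightarrow> (\<forall>x\<in>S. \<forall>y\<in>S. \<forall>a. f (x + y) = f x + f y \<and> f (a *\<^sub>C x) = a *\<^sub>C f x)"

text \<open>Linear extension of a (multilinear) assignment on words of length m+k,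
  split as a word of length m followed by a word of length k.\<close>
definition tlift :: "nat \<Rightarrow> nat \<Rightarrow> ('v list \<Rightarrow> 'v list \<Rightarrow> 'b::complex_vector) \<Rightarrow> 'v::complex_vector tens \<Rightarrow> 'b" where
  "tlift m k h x = sum_list (map (\<lambda>(c, w). if length w = m + k then c *\<^sub>C h (take m w) (drop m w) else 0) (rep_tens x))"

text \<open>f \<otimes> g : V^(m+k) \<rightarrow> V^(p+q) for f : V^m \<rightarrow> V^p, g : V^k \<rightarrow> V^q.\<close>
definition tmap :: "nat \<Rightarrow> nat \<Rightarrow> ('v tens \<Rightarrow> 'v tens) \<Rightarrow> ('v tens \<Rightarrow> 'v tens) \<Rightarrow> 'v::complex_vector tens \<Rightarrow> 'v tens" where
  "tmap m k f g = tlift m k (\<lambda>u w. tmul (f (tw u)) (g (tw w)))"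

text \<open>K \<otimes> L : V^(m+k) \<rightarrow> \<complex> for functionals K on V^m and L on V^k.\<close>
definition ftmap :: "nat \<Rightarrow> nat \<Rightarrow> ('v tens \<Rightarrow> complex) \<Rightarrow> ('v tens \<Rightarrow> complex) \<Rightarrow> 'v::complex_vector tens \<Rightarrow> complex" where
  "ftmap m k K L = tlift m k (\<lambda>u w. K (tw u) * L (tw w))"

text \<open>A functional V^m \<rightarrow> \<complex> viewed as a map V^m \<rightarrow> V^0 (\<complex> = V^0, 1 = tw []).\<close>
definition scal :: "('v tens \<Rightarrow> complex) \<Rightarrow> 'v::complex_vector tens \<Rightarrow> 'v tens" where
  "scal K x = K x *\<^sub>C tw []"

text \<open>(* \<otimes> *) \<circ> \<tau> on V \<otimes> V: a \<otimes> b \<mapsto> b* \<otimes> a* (antilinear).\<close>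
definition sflip :: "('v \<Rightarrow> 'v) \<Rightarrow> 'v::complex_vector tens \<Rightarrow> 'v tens" where
  "sflip st x = sum_list (map (\<lambda>(c, w). if length w = 2 then cnj c *\<^sub>C tw (rev (map st w)) else 0) (rep_tens x))"

fun braid1 :: "('v tens \<Rightarrow> 'v tens) \<Rightarrow> nat \<Rightarrow> 'v::complex_vector tens \<Rightarrow> 'v tens" where
  "braid1 b 0 = id"
| "braid1 b (Suc m) = tmap 1 (Suc m) id (braid1 b m) \<circ> tmap 2 m b id"

fun braid :: "('v tens \<Rightarrow> 'v tens) \<Rightarrow> nat \<Rightarrow> nat \<Rightarrow> 'v::complex_vector tens \<Rightarrow> 'v tens" where
  "braid b 0 m = id"
| "braid b (Suc n) m = tmap (n + m) 1 (braid b n m) id \<circ> tmap n (Suc m) id (braid1 b m)"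

definition braiding :: "('v::complex_vector tens \<Rightarrow> 'v tens) \<Rightarrow> bool" where
  "braiding b \<longleftrightarrow> lin_on (Tn 2) b \<and> bij_betw b (Tn 2) (Tn 2) \<and>
     (\<forall>x\<in>Tn 3. (tmap 2 1 b id \<circ> tmap 1 2 id b \<circ> tmap 2 1 b id) x
              = (tmap 1 2 id b \<circ> tmap 2 1 b id \<circ> tmap 1 2 id b) x)"

definition beta_inv :: "('v::complex_vector tens \<Rightarrow> 'v tens) \<Rightarrow> nat \<Rightarrow> nat \<Rightarrow> ('v tens \<Rightarrow> 'v tens) \<Rightarrow> bool" where
  "beta_inv b m n f \<longleftrightarrow>
     (\<forall>x\<in>Tn (1 + m). tmap m 1 f id (braid1 b m x) = braid1 b n (tmap 1 m id f x))"

definition beta_inv_inv :: "('v tens \<Rightarrow> 'v tens) \<Rightarrow> nat \<Rightarrow> nat \<Rightarrow> ('v::complex_vector tens \<Rightarrow> 'v tens) \<Rightarrow> bool" where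
  "beta_inv_inv b m n f \<longleftrightarrow>
     (\<forall>x\<in>Tn (m + 1). tmap 1 m id f (braid b m 1 x) = braid b n 1 (tmap m 1 f id x))"

definition beta_compatible where
  "beta_compatible b m n f \<longleftrightarrow> beta_inv b m n f \<and> beta_inv_inv b m n f"

text \<open>Comultiplication D : V \<rightarrow> V \<otimes> V and counit e : V \<rightarrow> \<complex>, as maps on T(V) restricted to V = Tn 1.\<close>
definition braided_coalgebra ::
  "('v::complex_vector tens \<Rightarrow> 'v tens) \<Rightarrow> ('v tens \<Rightarrow> complex) \<Rightarrow> ('v tens \<Rightarrow> 'v tens) \<Rightarrow> bool" where
  "braided_coalgebra D e b \<longleftrightarrow> braiding b \<and>
     lin_on (Tn 1) D \<and> D ` Tn 1 \<subseteq> Tn 2 \<and> lin_on (Tn 1) e \<and>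
     (\<forall>x\<in>Tn 1. tmap 1 1 D id (D x) = tmap 1 1 id D (D x)) \<and>
     (\<forall>x\<in>Tn 1. tmap 1 1 (scal e) id (D x) = x \<and> tmap 1 1 id (scal e) (D x) = x) \<and>
     beta_compatible b 1 2 D \<and> beta_compatible b 1 0 (scal e)"

definition braided_star_coalgebra ::
  "('v::complex_vector tens \<Rightarrow> 'v tens) \<Rightarrow> ('v tens \<Rightarrow> complex) \<Rightarrow> ('v tens \<Rightarrow> 'v tens) \<Rightarrow> ('v \<Rightarrow> 'v) \<Rightarrow> bool" where
  "braided_star_coalgebra D e b st \<longleftrightarrow> braided_coalgebra D e b \<and>
     (\<forall>a x y. st (a *\<^sub>C x + y) = cnj a *\<^sub>C st x + st y) \<and> (\<forall>x. st (st x) = x) \<and>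
     (\<forall>c. D (tw [st c]) = b (sflip st (D (tw [c])))) \<and>
     (\<forall>c. e (tw [st c]) = cnj (e (tw [c]))) \<and>
     (\<forall>x\<in>Tn 2. b (sflip st x) = sflip st (inv_into (Tn 2) b x))"

definition hermitian :: "('v \<Rightarrow> 'v) \<Rightarrow> ('v::complex_vector tens \<Rightarrow> complex) \<Rightarrow> bool" where
  "hermitian st K \<longleftrightarrow> (\<forall>a b. K (tw [st a, st b]) = cnj (K (tw [b, a])))"

text \<open>Lambda = (id \<otimes> beta \<otimes> id) \<circ> (D \<otimes> D) : V^2 \<rightarrow> V^4, and convolution K \<star> L = (K \<otimes> L) \<circ> Lambda.\<close>
definition Lam :: "('v tens \<Rightarrow> 'v tens) \<Rightarrow> ('v::complex_vector tens \<Rightarrow> 'v tens) \<Rightarrow> 'v tens \<Rightarrow> 'v tens" where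
  "Lam b D = tmap 1 3 id (tmap 2 1 b id) \<circ> tmap 1 1 D D"

definition conv :: "('v tens \<Rightarrow> 'v tens) \<Rightarrow> ('v::complex_vector tens \<Rightarrow> 'v tens) \<Rightarrow> ('v tens \<Rightarrow> complex) \<Rightarrow> ('v tens \<Rightarrow> complex) \<Rightarrow> 'v tens \<Rightarrow> complex" where
  "conv b D K L = ftmap 2 2 K L \<circ> Lam b D"

end

theory Submission imports Defs begin

lemma scaleC_zero_right[simp]: "a *\<^sub>C (0::'a::complex_vector) = 0"
proof -
  have "a *\<^sub>C (0::'a) = a *\<^sub>C (0 + 0)" by simp
  also have "\<dots> = a *\<^sub>C 0 + a *\<^sub>C 0" by (rule scaleC_add_right)
  finally show ?thesis by simp
qed

lemma scaleC_zero_left[simp]: "0 *\<^sub>C (x::'a::complex_vector) = 0"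
proof -
  have "0 *\<^sub>C x = (0 + 0) *\<^sub>C x" by simp
  also have "\<dots> = 0 *\<^sub>C x + 0 *\<^sub>C x" by (rule scaleC_add_left)
  finally show ?thesis by simp
qed

lemma scaleC_neg_cancel: "(-1) *\<^sub>C (z::'a::complex_vector) + z = 0"
proof -
  have "(-1) *\<^sub>C z + z = (-1) *\<^sub>C z + 1 *\<^sub>C z" by (simp add: scaleC_one)
  also have "\<dots> = ((-1) + 1) *\<^sub>C z" by (rule scaleC_add_left[symmetric])
  finally show ?thesis by simp
qed

lemma scaleC_sum_list: "a *\<^sub>C sum_list (map f xs) = sum_list (map (\<lambda>x. a *\<^sub>C (f x :: 'a::complex_vector)) xs)"
  by (induct xs) (auto simp: scaleC_add_right)

lemma scaleC_cplx[simp]: "a *\<^sub>C (z::complex) = a * z"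
  by (simp add: scaleC_complex_def)

section \<open>Evaluation functionals\<close>

definition ev :: "('v::complex_vector list \<Rightarrow> complex) \<Rightarrow> 'v tens \<Rightarrow> complex" where
  "ev \<phi> x = tsum \<phi> (rep_tens x)"

lemma rep_abs_teq: "teq (rep_tens (abs_tens xs)) xs"
  by (rule Quotient3_rep_abs[OF Quotient3_tens]) (simp add: teq_def)

lemma ev_abs: "mlin \<phi> \<Longrightarrow> ev \<phi> (abs_tens xs) = tsum \<phi> xs"
  using rep_abs_teq[of xs] unfolding teq_def ev_def by blast

lemma tens_eqI: "(\<And>\<phi>. mlin \<phi> \<Longrightarrow> ev \<phi> x = ev \<phi> y) \<Longrightarrow> x = y"
  using Quotient3_rel_rep[OF Quotient3_tens, of x y] unfolding teq_def ev_def by blast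

lemma abs_rep_tens: "abs_tens (rep_tens x) = x"
  by (rule Quotient3_abs_rep[OF Quotient3_tens])

lemma plus_rep: "x + y = abs_tens (rep_tens x @ rep_tens y)"
  by (metis abs_rep_tens plus_tens.abs_eq)

lemma scale_rep: "a *\<^sub>C x = abs_tens (sc_list a (rep_tens x))"
  by (metis abs_rep_tens scaleC_tens.abs_eq)

lemma tmul_rep: "tmul x y = abs_tens (cat_list (rep_tens x) (rep_tens y))"
  by (metis abs_rep_tens tmul.abs_eq)

lemma ev_plus: "mlin \<phi> \<Longrightarrow> ev \<phi> (x + y) = ev \<phi> x + ev \<phi> y"
  by (simp add: plus_rep ev_abs) (simp add: ev_def)

lemma ev_scale: "mlin \<phi> \<Longrightarrow> ev \<phi> (a *\<^sub>C x) = a * ev \<phi> x"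
  by (simp add: scale_rep ev_abs) (simp add: ev_def)

lemma ev_zero: "mlin \<phi> \<Longrightarrow> ev \<phi> 0 = 0"
  by (simp add: zero_tens_def ev_abs)

lemma ev_tw: "mlin \<phi> \<Longrightarrow> ev \<phi> (tw w) = \<phi> w"
  by (simp add: tw_def ev_abs tsum_def)

lemma ev_tmul: "mlin \<phi> \<Longrightarrow> ev \<phi> (tmul x y) = ev (\<lambda>u. ev (\<lambda>w. \<phi> (u @ w)) y) x"
  by (simp add: tmul_rep ev_abs tsum_cat_list) (simp add: ev_def)

lemma mlin_ev_right: "mlin \<phi> \<Longrightarrow> mlin (\<lambda>u. ev (\<lambda>w. \<phi> (u @ w)) y)"
  unfolding ev_def by (rule mlin_tsum)

lemma tsum_fun_add: "tsum (\<lambda>w. f w + g w) xs = tsum f xs + tsum g xs"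
  by (induct xs) (auto simp: tsum_def algebra_simps)

lemma tsum_fun_scale: "tsum (\<lambda>w. a * f w) xs = a * tsum f xs"
  by (induct xs) (auto simp: tsum_def algebra_simps)

lemma ev_fun_add: "ev (\<lambda>w. f w + g w) x = ev f x + ev g x"
  by (simp add: ev_def tsum_fun_add)

lemma ev_fun_scale: "ev (\<lambda>w. a * f w) x = a * ev f x"
  by (simp add: ev_def tsum_fun_scale)

lemma ev_sum_list: "mlin \<phi> \<Longrightarrow> ev \<phi> (sum_list (map F xs)) = sum_list (map (\<lambda>x. ev \<phi> (F x)) xs)"
  by (induct xs) (auto simp: ev_plus ev_zero)

lemma tw_mlin: "tw (us @ (a *\<^sub>C x + y) # ws) = a *\<^sub>C tw (us @ x # ws) + tw (us @ y # ws)"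
  by (rule tens_eqI) (simp add: ev_plus ev_scale ev_tw mlin_def)

lemma mlin_app_right: "mlin \<phi> \<Longrightarrow> mlin (\<lambda>u. \<phi> (u @ v))"
  unfolding mlin_def by simp

lemma tmul_tw: "tmul (tw u) (tw v) = tw (u @ v)"
  by (rule tens_eqI) (simp add: ev_tmul ev_tw mlin_ev_right mlin_app mlin_app_right)

lemma tmul_add_left: "tmul (x + y) z = tmul x z + tmul y z"
  by (rule tens_eqI) (simp add: ev_tmul ev_plus mlin_ev_right)

lemma tmul_scale_left: "tmul (a *\<^sub>C x) z = a *\<^sub>C tmul x z"
  by (rule tens_eqI) (simp add: ev_tmul ev_scale mlin_ev_right)

lemma tmul_add_right: "tmul x (y + z) = tmul x y + tmul x z"
  by (rule tens_eqI) (simp add: ev_tmul ev_plus mlin_app ev_fun_add)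

lemma tmul_scale_right: "tmul x (a *\<^sub>C y) = a *\<^sub>C tmul x y"
  by (rule tens_eqI) (simp add: ev_tmul ev_scale mlin_app ev_fun_scale)

lemma tmul_assoc: "tmul (tmul x y) z = tmul x (tmul y z)"
proof (rule tens_eqI)
  fix \<phi> :: "'a list \<Rightarrow> complex" assume m: "mlin \<phi>"
  have m2: "mlin (\<lambda>u. ev (\<lambda>w. \<phi> (u @ w)) z)" by (rule mlin_ev_right[OF m])
  show "ev \<phi> (tmul (tmul x y) z) = ev \<phi> (tmul x (tmul y z))"
    using m m2 by (simp add: ev_tmul mlin_ev_right mlin_app)
qed

lemma tmul_unit_left[simp]: "tmul (tw []) x = x"
  by (rule tens_eqI) (simp add: ev_tmul ev_tw mlin_ev_right)

lemma tmul_unit_right[simp]: "tmul x (tw []) = x"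
  by (rule tens_eqI) (simp add: ev_tmul ev_tw mlin_app)


section \<open>Linear extensions from words\<close>

definition hom :: "(complex \<Rightarrow> complex) \<Rightarrow> bool" where
  "hom \<sigma> \<longleftrightarrow> (\<forall>a b. \<sigma> (a * b) = \<sigma> a * \<sigma> b) \<and> (\<forall>a b. \<sigma> (a + b) = \<sigma> a + \<sigma> b) \<and> (\<forall>a. \<sigma> (\<sigma> a) = a) \<and> \<sigma> 1 = 1"

lemma hom_id: "hom id" by (simp add: hom_def)
lemma hom_cnj: "hom cnj" by (simp add: hom_def)

lemma hom_zero: "hom \<sigma> \<Longrightarrow> \<sigma> 0 = 0"
  unfolding hom_def by (metis add.right_neutral add_cancel_right_right)

lemma hom_sum_list: "hom \<sigma> \<Longrightarrow> \<sigma> (sum_list (map f xs)) = sum_list (map (\<lambda>x. \<sigma> (f x)) xs)"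
  by (induct xs) (auto simp: hom_zero, simp add: hom_def)

definition LS :: "(complex \<Rightarrow> complex) \<Rightarrow> ('v::complex_vector list \<Rightarrow> 'w::complex_vector) \<Rightarrow> 'v tens \<Rightarrow> 'w" where
  "LS \<sigma> H x = sum_list (map (\<lambda>(c, w). \<sigma> c *\<^sub>C H w) (rep_tens x))"

definition wd :: "(complex \<Rightarrow> complex) \<Rightarrow> ('v::complex_vector list \<Rightarrow> 'w::complex_vector) \<Rightarrow> bool" where
  "wd \<sigma> H \<longleftrightarrow> (\<forall>xs ys. teq xs ys \<longrightarrow>
     sum_list (map (\<lambda>(c, w). \<sigma> c *\<^sub>C H w) xs) = sum_list (map (\<lambda>(c, w). \<sigma> c *\<^sub>C H w) ys))"

definition mlH :: "(complex \<Rightarrow> complex) \<Rightarrow> ('v::complex_vector list \<Rightarrow> 'w::complex_vector) \<Rightarrow> bool" where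
  "mlH \<sigma> H \<longleftrightarrow> (\<forall>us ws a x y. H (us @ (a *\<^sub>C x + y) # ws) = \<sigma> a *\<^sub>C H (us @ x # ws) + H (us @ y # ws))"

lemma LS_abs: "wd \<sigma> H \<Longrightarrow> LS \<sigma> H (abs_tens xs) = sum_list (map (\<lambda>(c, w). \<sigma> c *\<^sub>C H w) xs)"
  unfolding LS_def wd_def using rep_abs_teq by blast

lemma LS_add: "wd \<sigma> H \<Longrightarrow> LS \<sigma> H (x + y) = LS \<sigma> H x + LS \<sigma> H y"
  by (simp add: plus_rep LS_abs) (simp add: LS_def)

lemma LS_scale: assumes "wd \<sigma> H" "hom \<sigma>" shows "LS \<sigma> H (a *\<^sub>C x) = \<sigma> a *\<^sub>C LS \<sigma> H x"
proof -
  have "LS \<sigma> H (a *\<^sub>C x) = sum_list (map (\<lambda>(c, w). \<sigma> c *\<^sub>C H w) (sc_list a (rep_tens x)))"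
    by (simp add: scale_rep LS_abs assms)
  also have "\<dots> = sum_list (map (\<lambda>p. \<sigma> a *\<^sub>C (case p of (c, w) \<Rightarrow> \<sigma> c *\<^sub>C H w)) (rep_tens x))"
    unfolding sc_list_def using assms(2) by (simp add: comp_def case_prod_unfold scaleC_scaleC hom_def)
  also have "\<dots> = \<sigma> a *\<^sub>C LS \<sigma> H x"
    by (simp add: LS_def scaleC_sum_list)
  finally show ?thesis .
qed

lemma LS_tw: "wd \<sigma> H \<Longrightarrow> hom \<sigma> \<Longrightarrow> LS \<sigma> H (tw w) = H w"
  by (simp add: tw_def LS_abs hom_def scaleC_one)

lemma LS_lin: "wd \<sigma> H \<Longrightarrow> hom \<sigma> \<Longrightarrow> LS \<sigma> H (c *\<^sub>C x + y) = \<sigma> c *\<^sub>C LS \<sigma> H x + LS \<sigma> H y"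
  by (simp add: LS_add LS_scale)

lemma wd_tens:
  assumes h: "hom \<sigma>" and m: "mlH \<sigma> (H :: 'v::complex_vector list \<Rightarrow> 'u::complex_vector tens)"
  shows "wd \<sigma> H"
  unfolding wd_def
proof (intro allI impI)
  fix xs ys :: "(complex \<times> 'v list) list" assume t: "teq xs ys"
  show "sum_list (map (\<lambda>(c, w). \<sigma> c *\<^sub>C H w) xs) = sum_list (map (\<lambda>(c, w). \<sigma> c *\<^sub>C H w) ys)"
  proof (rule tens_eqI)
    fix \<phi> :: "'u list \<Rightarrow> complex" assume mp: "mlin \<phi>"
    define \<psi> where "\<psi> w = \<sigma> (ev \<phi> (H w))" for w
    have mps: "mlin \<psi>"
      unfolding mlin_def \<psi>_def
    proof (intro allI)
      fix us ws a x y
      show "\<sigma> (ev \<phi> (H (us @ (a *\<^sub>C x + y) # ws))) = a * \<sigma> (ev \<phi> (H (us @ x # ws))) + \<sigma> (ev \<phi> (H (us @ y # ws)))"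
        using m mp h unfolding mlH_def hom_def by (simp add: ev_plus ev_scale)
    qed
    have key: "\<And>zs. ev \<phi> (sum_list (map (\<lambda>(c, w). \<sigma> c *\<^sub>C H w) zs)) = \<sigma> (tsum \<psi> zs)"
    proof -
      fix zs :: "(complex \<times> 'v list) list"
      have "\<sigma> (tsum \<psi> zs) = sum_list (map (\<lambda>p. \<sigma> (case p of (c, w) \<Rightarrow> c * \<psi> w)) zs)"
        unfolding tsum_def by (simp add: hom_sum_list[OF h] comp_def)
      also have "\<dots> = sum_list (map (\<lambda>p. ev \<phi> (case p of (c, w) \<Rightarrow> \<sigma> c *\<^sub>C H w)) zs)"
        using h mp by (intro arg_cong[where f=sum_list] map_cong) (auto simp: \<psi>_def hom_def ev_scale)
      finally show "ev \<phi> (sum_list (map (\<lambda>(c, w). \<sigma> c *\<^sub>C H w) zs)) = \<sigma> (tsum \<psi> zs)"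
        by (simp add: ev_sum_list[OF mp])
    qed
    show "ev \<phi> (sum_list (map (\<lambda>(c, w). \<sigma> c *\<^sub>C H w) xs)) = ev \<phi> (sum_list (map (\<lambda>(c, w). \<sigma> c *\<^sub>C H w) ys))"
      using t mps unfolding key teq_def by simp
  qed
qed

lemma wd_cplx:
  assumes m: "mlH id (H :: 'v::complex_vector list \<Rightarrow> complex)"
  shows "wd id H"
  unfolding wd_def
proof (intro allI impI)
  fix xs ys :: "(complex \<times> 'v list) list" assume t: "teq xs ys"
  have "mlin H" using m unfolding mlH_def mlin_def by simp
  then have "tsum H xs = tsum H ys" using t unfolding teq_def by blast
  then show "sum_list (map (\<lambda>(c, w). id c *\<^sub>C H w) xs) = sum_list (map (\<lambda>(c, w). id c *\<^sub>C H w) ys)"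
    by (simp add: tsum_def)
qed

lemma mlH_guard:
  assumes "\<And>us ws a x y. length us + length ws + 1 = n \<Longrightarrow>
      G (us @ (a *\<^sub>C x + y) # ws) = \<sigma> a *\<^sub>C G (us @ x # ws) + G (us @ y # ws)"
  shows "mlH \<sigma> (\<lambda>w. if length w = n then G w else (0::'w::complex_vector))"
  unfolding mlH_def using assms by auto

lemma Tn_tw: "length w = n \<Longrightarrow> tw w \<in> Tn n"
  unfolding tw_def Tn_def by auto

lemma Tn_zero: "0 \<in> Tn n"
  unfolding Tn_def zero_tens_def by auto

lemma Tn_add: "x \<in> Tn n \<Longrightarrow> y \<in> Tn n \<Longrightarrow> x + y \<in> Tn n"
  unfolding Tn_def by (auto simp: plus_tens.abs_eq) (metis Un_iff set_append)

lemma Tn_scale: assumes "x \<in> Tn n" shows "c *\<^sub>C x \<in> Tn n"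
proof -
  obtain xs where "x = abs_tens xs" "\<forall>p\<in>set xs. length (snd p) = n" using assms unfolding Tn_def by auto
  then show ?thesis unfolding Tn_def
    by (intro CollectI exI[of _ "sc_list c xs"]) (auto simp: scaleC_tens.abs_eq sc_list_def)
qed

lemma Tn_lin: "x \<in> Tn n \<Longrightarrow> y \<in> Tn n \<Longrightarrow> c *\<^sub>C x + y \<in> Tn n"
  by (simp add: Tn_add Tn_scale)

lemma abs_cons: "abs_tens ((c, w) # xs) = c *\<^sub>C tw w + abs_tens xs"
proof -
  have "abs_tens ((c, w) # xs) = abs_tens (sc_list c [(1, w)] @ xs)" by (simp add: sc_list_def)
  then show ?thesis by (simp add: plus_tens.abs_eq[symmetric] scaleC_tens.abs_eq[symmetric] tw_def)
qed

lemma Tn_induct[consumes 1, case_names zero tw lin]: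
  assumes x: "x \<in> Tn n" and z: "P 0"
    and t: "\<And>w. length w = n \<Longrightarrow> P (tw w)"
    and l: "\<And>c x y. x \<in> Tn n \<Longrightarrow> y \<in> Tn n \<Longrightarrow> P x \<Longrightarrow> P y \<Longrightarrow> P (c *\<^sub>C x + y)"
  shows "P x"
proof -
  obtain xs where xs: "x = abs_tens xs" "\<forall>p\<in>set xs. length (snd p) = n"
    using x unfolding Tn_def by auto
  have "P (abs_tens xs) \<and> abs_tens xs \<in> Tn n" using xs(2)
  proof (induct xs)
    case Nil then show ?case using z Tn_zero by (simp add: zero_tens_def)
  next
    case (Cons p xs)
    obtain c w where p: "p = (c, w)" by (cases p)
    have lw: "length w = n" using Cons.prems p by auto
    have "P (c *\<^sub>C tw w + abs_tens xs)"
      using Cons lw by (intro l) (auto intro: t Tn_tw)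
    moreover have "c *\<^sub>C tw w + abs_tens xs \<in> Tn n"
      using Cons lw by (intro Tn_lin Tn_tw) auto
    ultimately show ?case by (simp add: p abs_cons)
  qed
  then show ?thesis using xs by simp
qed

definition linT :: "nat \<Rightarrow> (complex \<Rightarrow> complex) \<Rightarrow> ('v::complex_vector tens \<Rightarrow> 'w::complex_vector) \<Rightarrow> bool" where
  "linT n \<sigma> F \<longleftrightarrow> (\<forall>x\<in>Tn n. \<forall>y\<in>Tn n. \<forall>c. F (c *\<^sub>C x + y) = \<sigma> c *\<^sub>C F x + F y)"

lemma Tn_ext:
  assumes x: "x \<in> Tn n" and F: "linT n \<sigma> F" and G: "linT n \<sigma> G"
    and w: "\<And>w. length w = n \<Longrightarrow> F (tw w) = G (tw w)"
  shows "F x = G x"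
  using x
proof (induct rule: Tn_induct)
  case zero
  define w0 where "w0 = replicate n (undefined::'a)"
  have l: "length w0 = n" by (simp add: w0_def)
  have "F ((-1) *\<^sub>C tw w0 + tw w0) = G ((-1) *\<^sub>C tw w0 + tw w0)"
    using F G l w Tn_tw[OF l] unfolding linT_def by simp
  then show ?case by (simp add: scaleC_neg_cancel)
next
  case (tw w) then show ?case using w by simp
next
  case (lin c x y) then show ?case using F G unfolding linT_def by simp
qed

lemma linT_LS: "wd \<sigma> H \<Longrightarrow> hom \<sigma> \<Longrightarrow> linT n \<sigma> (LS \<sigma> H)"
  unfolding linT_def by (simp add: LS_lin)

lemma lin_on_linT: fixes f :: "'v::complex_vector tens \<Rightarrow> 'w::complex_vector" shows "lin_on (Tn n) f \<longleftrightarrow> linT n id f"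
proof
  assume a: "lin_on (Tn n) f"
  show "linT n id f" unfolding linT_def
    using a unfolding lin_on_def by (simp add: Tn_scale)
next
  assume a: "linT n id f"
  have z: "f 0 = 0"
  proof -
    have "f (1 *\<^sub>C 0 + 0) = 1 *\<^sub>C f 0 + f 0" using a Tn_zero unfolding linT_def by (metis id_apply)
    then show ?thesis by (simp add: scaleC_one)
  qed
  show "lin_on (Tn n) f" unfolding lin_on_def
  proof (intro ballI allI conjI)
    fix x y :: "'v tens" and c assume "x \<in> Tn n" "y \<in> Tn n"
    then show "f (x + y) = f x + f y" using a unfolding linT_def by (metis id_apply scaleC_one)
    show "f (c *\<^sub>C x) = c *\<^sub>C f x" using a \<open>x \<in> Tn n\<close> Tn_zero z unfolding linT_def by (metis id_apply add_0_right)
  qed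
qed

lemma linT_comp:
  assumes "linT n \<sigma>1 F" "F ` Tn n \<subseteq> Tn m" "linT m \<sigma>2 G"
  shows "linT n (\<sigma>2 \<circ> \<sigma>1) (G \<circ> F)"
  using assms unfolding linT_def by (auto simp: image_subset_iff)

lemma linT_cong: "linT n \<sigma> F \<Longrightarrow> (\<And>x. x \<in> Tn n \<Longrightarrow> F x = G x) \<Longrightarrow> linT n \<sigma> G"
  unfolding linT_def by (simp add: Tn_lin)

lemma Tn_image: assumes "linT n \<sigma> F" "\<And>w. length w = n \<Longrightarrow> F (tw w) \<in> Tn m" "x \<in> Tn n"
  shows "F x \<in> Tn m"
  using assms(3)
proof (induct rule: Tn_induct)
  case zero
  define w0 where "w0 = replicate n (undefined::'a)"
  have l: "length w0 = n" by (simp add: w0_def)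
  have "F ((-1) *\<^sub>C tw w0 + tw w0) = \<sigma> (-1) *\<^sub>C F (tw w0) + F (tw w0)"
    using assms(1) l Tn_tw[OF l] unfolding linT_def by simp
  then show ?case using assms(2)[OF l] by (simp add: scaleC_neg_cancel Tn_lin)
next
  case (tw w) then show ?case using assms(2) by simp
next
  case (lin c x y) then show ?case using assms(1) unfolding linT_def by (simp add: Tn_lin)
qed


lemma tmul_zero_left[simp]: "tmul 0 y = 0"
  using tmul_scale_left[of 0 0 y] by simp

lemma tmul_zero_right[simp]: "tmul x 0 = 0"
  using tmul_scale_right[of x 0 0] by simp

lemma linT_tmul_left: "linT n id (\<lambda>x. tmul x y)"
  unfolding linT_def by (simp add: tmul_add_left tmul_scale_left)

lemma linT_tmul_right: "linT n id (\<lambda>y. tmul x y)"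
  unfolding linT_def by (simp add: tmul_add_right tmul_scale_right)

lemma tmul_Tn: assumes "x \<in> Tn m" "y \<in> Tn k" shows "tmul x y \<in> Tn (m + k)"
proof -
  have "\<And>u. length u = m \<Longrightarrow> tmul (tw u) y \<in> Tn (m + k)"
    by (rule Tn_image[OF linT_tmul_right _ assms(2)]) (simp add: tmul_tw Tn_tw)
  then show ?thesis by (rule Tn_image[OF linT_tmul_left _ assms(1)])
qed

lemma lin_on_app: "lin_on (Tn n) f \<Longrightarrow> x \<in> Tn n \<Longrightarrow> y \<in> Tn n \<Longrightarrow> f (a *\<^sub>C x + y) = a *\<^sub>C f x + f y"
  unfolding lin_on_linT linT_def by simp

lemma lin_on_zero: assumes "lin_on (Tn n) f" shows "f 0 = 0"
proof -
  have "f (1 *\<^sub>C 0 + 0) = 1 *\<^sub>C f 0 + f 0" by (rule lin_on_app[OF assms Tn_zero Tn_zero])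
  then show ?thesis by (simp add: scaleC_one)
qed

lemma lin_on_id: "lin_on S id" by (simp add: lin_on_def)

lemma take_drop_split:
  assumes "length us < m"
  shows "take m (us @ z # ws) = us @ z # take (m - length us - 1) ws"
    and "drop m (us @ z # ws) = drop (m - length us - 1) ws"
  using assms by (auto simp: take_Cons' drop_Cons')

lemma take_drop_split2:
  assumes "\<not> length us < m"
  shows "take m (us @ z # ws) = take m us"
    and "drop m (us @ z # ws) = drop m us @ z # ws"
  using assms by auto

definition TH :: "nat \<Rightarrow> nat \<Rightarrow> ('v tens \<Rightarrow> 'v tens) \<Rightarrow> ('v tens \<Rightarrow> 'v tens) \<Rightarrow> 'v::complex_vector list \<Rightarrow> 'v tens" where
  "TH m k f g = (\<lambda>w. if length w = m + k then tmul (f (tw (take m w))) (g (tw (drop m w))) else 0)"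

lemma mlH_TH:
  assumes f: "lin_on (Tn m) f" and g: "lin_on (Tn k) g"
  shows "mlH id (TH m k f g)"
  unfolding TH_def
proof (rule mlH_guard)
  fix us ws :: "'a list" and a x y assume len: "length us + length ws + 1 = m + k"
  show "tmul (f (tw (take m (us @ (a *\<^sub>C x + y) # ws)))) (g (tw (drop m (us @ (a *\<^sub>C x + y) # ws)))) =
    id a *\<^sub>C tmul (f (tw (take m (us @ x # ws)))) (g (tw (drop m (us @ x # ws)))) +
    tmul (f (tw (take m (us @ y # ws)))) (g (tw (drop m (us @ y # ws))))"
  proof (cases "length us < m")
    case True
    let ?j = "m - length us - 1"
    have l: "\<And>z. tw (us @ z # take (m - Suc (length us)) ws) \<in> Tn m" using True len by (intro Tn_tw) auto
    show ?thesis using True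
      by (simp only: take_drop_split[OF True]) (simp add: take_drop_split tw_mlin lin_on_app[OF f] l tmul_add_left tmul_scale_left)
  next
    case False
    have l: "\<And>z. tw (drop m us @ z # ws) \<in> Tn k" using False len by (intro Tn_tw) auto
    show ?thesis using False
      by (simp only: take_drop_split2[OF False]) (simp add: take_drop_split2 tw_mlin lin_on_app[OF g] l tmul_add_right tmul_scale_right)
  qed
qed

lemma tmap_LS: "tmap m k f g = LS id (TH m k f g)"
  unfolding tmap_def tlift_def LS_def TH_def
  by (intro ext arg_cong[where f=sum_list] map_cong) auto

lemma wd_TH: "lin_on (Tn m) f \<Longrightarrow> lin_on (Tn k) g \<Longrightarrow> wd id (TH m k f g)"
  by (rule wd_tens[OF hom_id mlH_TH])

lemma tmap_tw:
  assumes "lin_on (Tn m) f" "lin_on (Tn k) g" "length w = m + k"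
  shows "tmap m k f g (tw w) = tmul (f (tw (take m w))) (g (tw (drop m w)))"
  using assms by (simp add: tmap_LS LS_tw wd_TH hom_id) (simp add: TH_def)

lemma tmap_lin: assumes "lin_on (Tn m) f" "lin_on (Tn k) g"
  shows "tmap m k f g (c *\<^sub>C x + y) = c *\<^sub>C tmap m k f g x + tmap m k f g y"
  using LS_lin[OF wd_TH[OF assms] hom_id] by (simp add: tmap_LS)

lemma linT_tmap: "lin_on (Tn m) f \<Longrightarrow> lin_on (Tn k) g \<Longrightarrow> linT n id (tmap m k f g)"
  unfolding linT_def by (simp add: tmap_lin)

lemma lin_on_tmap: "lin_on (Tn m) f \<Longrightarrow> lin_on (Tn k) g \<Longrightarrow> lin_on (Tn n) (tmap m k f g)"
  by (simp add: lin_on_linT linT_tmap)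

lemma tmap_tmul:
  assumes f: "lin_on (Tn m) f" and g: "lin_on (Tn k) g" and x: "x \<in> Tn m" and y: "y \<in> Tn k"
  shows "tmap m k f g (tmul x y) = tmul (f x) (g y)"
proof -
  have w: "tmap m k f g (tmul (tw u) y) = tmul (f (tw u)) (g y)" if u: "length u = m" for u
  proof (rule Tn_ext[OF y])
    show "linT k id (\<lambda>y. tmap m k f g (tmul (tw u) y))"
      unfolding linT_def by (simp add: tmul_add_right tmul_scale_right tmap_lin f g)
    show "linT k id (\<lambda>y. tmul (f (tw u)) (g y))"
      unfolding linT_def using g by (simp add: lin_on_app tmul_add_right tmul_scale_right)
    fix v :: "'a list" assume "length v = k"
    then show "tmap m k f g (tmul (tw u) (tw v)) = tmul (f (tw u)) (g (tw v))"
      using u by (simp add: tmul_tw tmap_tw f g)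
  qed
  show ?thesis
  proof (rule Tn_ext[OF x])
    show "linT m id (\<lambda>x. tmap m k f g (tmul x y))"
      unfolding linT_def by (simp add: tmul_add_left tmul_scale_left tmap_lin f g)
    show "linT m id (\<lambda>x. tmul (f x) (g y))"
      unfolding linT_def using f by (simp add: lin_on_app tmul_add_left tmul_scale_left)
  qed (rule w)
qed

lemma tmap_Tn:
  assumes f: "lin_on (Tn m) f" and g: "lin_on (Tn k) g"
    and fi: "f ` Tn m \<subseteq> Tn p" and gi: "g ` Tn k \<subseteq> Tn q" and x: "x \<in> Tn (m + k)"
  shows "tmap m k f g x \<in> Tn (p + q)"
proof (rule Tn_image[OF linT_tmap[OF f g] _ x])
  fix w :: "'a list" assume l: "length w = m + k"
  have "tw (take m w) \<in> Tn m" "tw (drop m w) \<in> Tn k" using l by (auto intro: Tn_tw)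
  then show "tmap m k f g (tw w) \<in> Tn (p + q)" using fi gi by (auto simp: tmap_tw f g l intro!: tmul_Tn)
qed

lemma tmap_comp:
  assumes f: "lin_on (Tn m) f" and g: "lin_on (Tn k) g"
    and f': "lin_on (Tn m) f'" and g': "lin_on (Tn k) g'"
    and fi: "f' ` Tn m \<subseteq> Tn m" and gi: "g' ` Tn k \<subseteq> Tn k" and x: "x \<in> Tn (m + k)"
  shows "tmap m k f g (tmap m k f' g' x) = tmap m k (f \<circ> f') (g \<circ> g') x"
proof -
  have ff: "lin_on (Tn m) (f \<circ> f')" using linT_comp[of m id f' m id f] f f' fi by (simp add: lin_on_linT)
  have gg: "lin_on (Tn k) (g \<circ> g')" using linT_comp[of k id g' k id g] g g' gi by (simp add: lin_on_linT)
  show ?thesis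
  proof (rule Tn_ext[OF x])
    show "linT (m + k) id (\<lambda>x. tmap m k f g (tmap m k f' g' x))"
      unfolding linT_def by (simp add: tmap_lin f g f' g')
    show "linT (m + k) id (tmap m k (f \<circ> f') (g \<circ> g'))" by (rule linT_tmap[OF ff gg])
    fix w :: "'a list" assume l: "length w = m + k"
    show "tmap m k f g (tmap m k f' g' (tw w)) = tmap m k (f \<circ> f') (g \<circ> g') (tw w)"
      using l fi gi by (auto simp: tmap_tw f g f' g' ff gg tmap_tmul Tn_tw image_subset_iff)
  qed
qed

lemma tmap_cong:
  assumes f: "lin_on (Tn m) f" and g: "lin_on (Tn k) g"
    and f': "lin_on (Tn m) f'" and g': "lin_on (Tn k) g'"
    and ef: "\<And>x. x \<in> Tn m \<Longrightarrow> f x = f' x" and eg: "\<And>x. x \<in> Tn k \<Longrightarrow> g x = g' x"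
    and x: "x \<in> Tn (m + k)"
  shows "tmap m k f g x = tmap m k f' g' x"
  by (rule Tn_ext[OF x linT_tmap[OF f g] linT_tmap[OF f' g']])
     (simp add: tmap_tw f g f' g' ef eg Tn_tw)

definition FH :: "nat \<Rightarrow> nat \<Rightarrow> ('v tens \<Rightarrow> complex) \<Rightarrow> ('v tens \<Rightarrow> complex) \<Rightarrow> 'v::complex_vector list \<Rightarrow> complex" where
  "FH m k f g = (\<lambda>w. if length w = m + k then f (tw (take m w)) * g (tw (drop m w)) else 0)"

lemma mlH_FH:
  assumes f: "lin_on (Tn m) f" and g: "lin_on (Tn k) g"
  shows "mlH id (FH m k f g)"
  unfolding FH_def
proof (rule mlH_guard)
  fix us ws :: "'a list" and a x y assume len: "length us + length ws + 1 = m + k"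
  show "f (tw (take m (us @ (a *\<^sub>C x + y) # ws))) * g (tw (drop m (us @ (a *\<^sub>C x + y) # ws))) =
    id a *\<^sub>C (f (tw (take m (us @ x # ws))) * g (tw (drop m (us @ x # ws)))) +
    f (tw (take m (us @ y # ws))) * g (tw (drop m (us @ y # ws)))"
  proof (cases "length us < m")
    case True
    let ?j = "m - length us - 1"
    have l: "\<And>z. tw (us @ z # take (m - Suc (length us)) ws) \<in> Tn m" using True len by (intro Tn_tw) auto
    show ?thesis using True
      by (simp only: take_drop_split[OF True]) (simp add: tw_mlin lin_on_app[OF f] l, simp add: algebra_simps)
  next
    case False
    have l: "\<And>z. tw (drop m us @ z # ws) \<in> Tn k" using False len by (intro Tn_tw) auto
    show ?thesis using False
      by (simp only: take_drop_split2[OF False]) (simp add: tw_mlin lin_on_app[OF g] l, simp add: algebra_simps)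
  qed
qed

lemma ftmap_LS: "ftmap m k f g = LS id (FH m k f g)"
  unfolding ftmap_def tlift_def LS_def FH_def
  by (intro ext arg_cong[where f=sum_list] map_cong) auto

lemma ftmap_tw:
  assumes "lin_on (Tn m) f" "lin_on (Tn k) g" "length w = m + k"
  shows "ftmap m k f g (tw w) = f (tw (take m w)) * g (tw (drop m w))"
  using assms by (simp add: ftmap_LS LS_tw wd_cplx mlH_FH hom_id) (simp add: FH_def)

lemma linT_ftmap: "lin_on (Tn m) f \<Longrightarrow> lin_on (Tn k) g \<Longrightarrow> linT n id (ftmap m k f g)"
  unfolding ftmap_LS by (rule linT_LS[OF wd_cplx[OF mlH_FH] hom_id])


lemma ftmap_lin: assumes "lin_on (Tn m) f" "lin_on (Tn k) g"
  shows "ftmap m k f g (c *\<^sub>C x + y) = c * ftmap m k f g x + ftmap m k f g y"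
  using LS_lin[OF wd_cplx[OF mlH_FH[OF assms]] hom_id] by (simp add: ftmap_LS)

section \<open>Star reversal\<close>

definition antilin :: "('v::complex_vector \<Rightarrow> 'v) \<Rightarrow> bool" where
  "antilin st \<longleftrightarrow> (\<forall>a x y. st (a *\<^sub>C x + y) = cnj a *\<^sub>C st x + st y)"

definition Sg :: "('v \<Rightarrow> 'v) \<Rightarrow> 'v::complex_vector tens \<Rightarrow> 'v tens" where
  "Sg st = LS cnj (\<lambda>w. tw (rev (map st w)))"

lemma mlH_Sg: "antilin st \<Longrightarrow> mlH cnj (\<lambda>w. tw (rev (map st w)))"
  unfolding mlH_def antilin_def by (simp add: tw_mlin)

lemma wd_Sg: "antilin st \<Longrightarrow> wd cnj (\<lambda>w. tw (rev (map st w)))"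
  by (rule wd_tens[OF hom_cnj mlH_Sg])

lemma Sg_tw: "antilin st \<Longrightarrow> Sg st (tw w) = tw (rev (map st w))"
  by (simp add: Sg_def LS_tw wd_Sg hom_cnj)

lemma Sg_lin: "antilin st \<Longrightarrow> Sg st (c *\<^sub>C x + y) = cnj c *\<^sub>C Sg st x + Sg st y"
  unfolding Sg_def by (rule LS_lin[OF wd_Sg hom_cnj])

lemma linT_Sg: "antilin st \<Longrightarrow> linT n cnj (Sg st)"
  unfolding linT_def by (simp add: Sg_lin)

lemma Sg_Tn: "antilin st \<Longrightarrow> x \<in> Tn n \<Longrightarrow> Sg st x \<in> Tn n"
  by (rule Tn_image[OF linT_Sg]) (auto simp: Sg_tw intro!: Tn_tw)

lemma sflip_eq: assumes a: "antilin st" and x: "x \<in> Tn 2" shows "sflip st x = Sg st x"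
proof -
  have m: "mlH cnj (\<lambda>w. if length w = 2 then tw (rev (map st w)) else 0)"
    by (rule mlH_guard) (use mlH_Sg[OF a] in \<open>simp add: mlH_def\<close>)
  have e: "sflip st = LS cnj (\<lambda>w. if length w = 2 then tw (rev (map st w)) else 0)"
    unfolding sflip_def LS_def by (intro ext arg_cong[where f=sum_list] map_cong) auto
  have w: "wd cnj (\<lambda>w. if length w = 2 then tw (rev (map st w)) else 0)" by (rule wd_tens[OF hom_cnj m])
  show ?thesis unfolding e
    by (rule Tn_ext[OF x linT_LS[OF w hom_cnj] linT_Sg[OF a]]) (simp add: LS_tw[OF w hom_cnj] Sg_tw a)
qed

lemma Sg_tmul: assumes a: "antilin st" and x: "x \<in> Tn m" and y: "y \<in> Tn k"
  shows "Sg st (tmul x y) = tmul (Sg st y) (Sg st x)"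
proof -
  have w: "Sg st (tmul (tw u) y) = tmul (Sg st y) (Sg st (tw u))" if "length u = m" for u
    by (rule Tn_ext[OF y, where \<sigma>=cnj])
       (auto simp: linT_def tmul_add_right tmul_scale_right tmul_add_left tmul_scale_left Sg_lin a Sg_tw tmul_tw)
  show ?thesis
    by (rule Tn_ext[OF x, where \<sigma>=cnj])
       (auto simp: linT_def tmul_add_right tmul_scale_right tmul_add_left tmul_scale_left Sg_lin a w)
qed

lemma lin_on_scal: "lin_on (Tn m) K \<Longrightarrow> lin_on (Tn m) (scal K)"
  unfolding lin_on_def scal_def by (simp add: scaleC_add_left scaleC_scaleC)

lemma scal_Tn: "scal K ` Tn m \<subseteq> Tn 0"
  unfolding scal_def by (auto intro!: Tn_scale Tn_tw)

lemma tmul_scal_left[simp]: "tmul (scal K x) y = K x *\<^sub>C y"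
  by (simp add: scal_def tmul_scale_left)

lemma tmul_scal_right[simp]: "tmul y (scal K x) = K x *\<^sub>C y"
  by (simp add: scal_def tmul_scale_right)

lemma tmap_id_id: assumes y: "y \<in> Tn (m + k)" shows "tmap m k id id y = y"
proof -
  have "tmap m k id id y = id y"
    by (rule Tn_ext[OF y linT_tmap[OF lin_on_id lin_on_id]]) (auto simp: linT_def tmap_tw lin_on_id tmul_tw)
  then show ?thesis by simp
qed

lemma tmap_n_0: assumes f: "lin_on (Tn m) f" and y: "y \<in> Tn m" shows "tmap m 0 f id y = f y"
  by (rule Tn_ext[where \<sigma>=id and F="tmap m 0 f id" and G=f, OF y])
     (use f in \<open>auto simp: lin_on_linT[symmetric] tmap_tw lin_on_id lin_on_tmap\<close>)

lemma tmap_0_n: assumes g: "lin_on (Tn k) g" and y: "y \<in> Tn k" shows "tmap 0 k id g y = g y"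
  by (rule Tn_ext[where \<sigma>=id and F="tmap 0 k id g" and G=g, OF y])
     (use g in \<open>auto simp: lin_on_linT[symmetric] tmap_tw lin_on_id lin_on_tmap\<close>)

lemma len4: "length w = 4 \<Longrightarrow> \<exists>a b c d. w = [a, b, c, d]"
  by (auto simp: numeral_eq_Suc length_Suc_conv)

lemma len3: "length w = 3 \<Longrightarrow> \<exists>a b c. w = [a, b, c]"
  by (auto simp: numeral_eq_Suc length_Suc_conv)

lemma lin_on_cong: "lin_on S f \<Longrightarrow> (\<And>x. x \<in> S \<Longrightarrow> f x = g x) \<Longrightarrow> (\<And>x y a. x \<in> S \<Longrightarrow> y \<in> S \<Longrightarrow> x + y \<in> S \<and> a *\<^sub>C x \<in> S) \<Longrightarrow> lin_on S g"
  unfolding lin_on_def by simp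

section \<open>Regrouping on V^4\<close>

lemma R1: assumes f: "lin_on (Tn 2) f" and y: "y \<in> Tn 4"
  shows "tmap 2 2 f id y = tmap 3 1 (tmap 2 1 f id) id y"
proof (rule Tn_ext[OF y, where \<sigma>=id])
  show "linT 4 id (tmap 2 2 f id)" by (rule linT_tmap[OF f lin_on_id])
  show "linT 4 id (tmap 3 1 (tmap 2 1 f id) id)" by (rule linT_tmap[OF lin_on_tmap[OF f lin_on_id] lin_on_id])
  fix w :: "'a list" assume "length w = 4"
  then obtain a b c d where w: "w = [a, b, c, d]" using len4 by blast
  show "tmap 2 2 f id (tw w) = tmap 3 1 (tmap 2 1 f id) id (tw w)"
    by (simp add: w tmap_tw f lin_on_id lin_on_tmap tmul_assoc tmul_tw)
qed

lemma R2: assumes g: "lin_on (Tn 2) g" and y: "y \<in> Tn 4"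
  shows "tmap 2 2 id g y = tmap 1 3 id (tmap 1 2 id g) y"
proof (rule Tn_ext[OF y, where \<sigma>=id])
  show "linT 4 id (tmap 2 2 id g)" by (rule linT_tmap[OF lin_on_id g])
  show "linT 4 id (tmap 1 3 id (tmap 1 2 id g))" by (rule linT_tmap[OF lin_on_id lin_on_tmap[OF lin_on_id g]])
  fix w :: "'a list" assume "length w = 4"
  then obtain a b c d where w: "w = [a, b, c, d]" using len4 by blast
  show "tmap 2 2 id g (tw w) = tmap 1 3 id (tmap 1 2 id g) (tw w)"
    by (simp add: w tmap_tw g lin_on_id lin_on_tmap tmul_assoc[symmetric] tmul_tw)
qed

lemma R3: assumes g: "lin_on (Tn 2) g" and y: "y \<in> Tn 4"
  shows "tmap 1 3 id (tmap 2 1 g id) y = tmap 3 1 (tmap 1 2 id g) id y"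
proof (rule Tn_ext[OF y, where \<sigma>=id])
  show "linT 4 id (tmap 1 3 id (tmap 2 1 g id))" by (rule linT_tmap[OF lin_on_id lin_on_tmap[OF g lin_on_id]])
  show "linT 4 id (tmap 3 1 (tmap 1 2 id g) id)" by (rule linT_tmap[OF lin_on_tmap[OF lin_on_id g] lin_on_id])
  fix w :: "'a list" assume "length w = 4"
  then obtain a b c d where w: "w = [a, b, c, d]" using len4 by blast
  show "tmap 1 3 id (tmap 2 1 g id) (tw w) = tmap 3 1 (tmap 1 2 id g) id (tw w)"
    by (simp add: w tmap_tw g lin_on_id lin_on_tmap tmul_assoc)
qed


section \<open>Braidings in low degree\<close>

declare braid1.simps[simp del] braid.simps[simp del]

lemma tmap_img: "lin_on (Tn m) f \<Longrightarrow> lin_on (Tn k) g \<Longrightarrow> f ` Tn m \<subseteq> Tn p \<Longrightarrow> g ` Tn k \<subseteq> Tn q \<Longrightarrow>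
  tmap m k f g ` Tn (m + k) \<subseteq> Tn (p + q)"
  by (rule image_subsetI) (rule tmap_Tn)

lemma tmap_img': "lin_on (Tn m) f \<Longrightarrow> lin_on (Tn k) g \<Longrightarrow> f ` Tn m \<subseteq> Tn p \<Longrightarrow> g ` Tn k \<subseteq> Tn q \<Longrightarrow>
  n = m + k \<Longrightarrow> r = p + q \<Longrightarrow> tmap m k f g ` Tn n \<subseteq> Tn r"
  by (simp only: tmap_img)

lemma tmap_id_id2: "y \<in> Tn n \<Longrightarrow> n = m + k \<Longrightarrow> tmap m k id id y = y"
  by (simp only: tmap_id_id)

lemma id_img: "id ` Tn n \<subseteq> Tn n" by simp

lemma lin_on_comp: "lin_on (Tn n) f \<Longrightarrow> f ` Tn n \<subseteq> Tn m \<Longrightarrow> lin_on (Tn m) g \<Longrightarrow> lin_on (Tn n) (g \<circ> f)"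
  unfolding lin_on_linT by (drule (2) linT_comp) simp

lemma Tn_closed: "x \<in> Tn n \<Longrightarrow> y \<in> Tn n \<Longrightarrow> x + y \<in> Tn n \<and> a *\<^sub>C x \<in> Tn n"
  by (simp add: Tn_add Tn_scale)

context
  fixes b :: "'v::complex_vector tens \<Rightarrow> 'v tens"
  assumes hb: "lin_on (Tn 2) b" and bi: "b ` Tn 2 \<subseteq> Tn 2"
begin

lemma s1_lin: "lin_on (Tn n) (tmap 2 1 b id)" by (rule lin_on_tmap[OF hb lin_on_id])
lemma s2_lin: "lin_on (Tn n) (tmap 1 2 id b)" by (rule lin_on_tmap[OF lin_on_id hb])
lemma s1_img: "tmap 2 1 b id ` Tn 3 \<subseteq> Tn 3" by (rule tmap_img'[OF hb lin_on_id bi id_img[of 1]]) simp_all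
lemma s2_img: "tmap 1 2 id b ` Tn 3 \<subseteq> Tn 3" by (rule tmap_img'[OF lin_on_id hb id_img[of 1] bi]) simp_all
lemma B1_img: "tmap 2 2 b id ` Tn 4 \<subseteq> Tn 4" by (rule tmap_img'[OF hb lin_on_id bi id_img[of 2]]) simp_all
lemma B3_img: "tmap 2 2 id b ` Tn 4 \<subseteq> Tn 4" by (rule tmap_img'[OF lin_on_id hb id_img[of 2] bi]) simp_all
lemma B2_img: "tmap 1 3 id (tmap 2 1 b id) ` Tn 4 \<subseteq> Tn 4"
  by (rule tmap_img'[OF lin_on_id s1_lin id_img[of 1] s1_img]) simp_all

lemma braid1_1_eq: "braid1 b 1 = tmap 1 1 id id \<circ> tmap 2 0 b id"
  by (simp add: numeral_eq_Suc braid1.simps)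
lemma braid1_2_eq: "braid1 b 2 = tmap 1 2 id (braid1 b 1) \<circ> tmap 2 1 b id"
  by (simp add: numeral_2_eq_2 braid1.simps)
lemma braid_2_1_eq: "braid b 2 1 = tmap 2 1 (braid b 1 1) id \<circ> tmap 1 2 id (braid1 b 1)"
  by (simp add: numeral_2_eq_2 braid.simps)
lemma braid_1_1_eq: "braid b 1 1 = tmap 1 1 id id \<circ> tmap 0 2 id (braid1 b 1)"
  by (simp add: numeral_eq_Suc braid.simps braid1.simps)

lemma T3: "x \<in> Tn 3 \<Longrightarrow> x \<in> Tn (1 + 2)" and T3': "x \<in> Tn 3 \<Longrightarrow> x \<in> Tn (2 + 1)"
  by (simp_all add: numeral_eq_Suc)

lemma braid1_1: assumes x: "x \<in> Tn 2" shows "braid1 b 1 x = b x"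
proof -
  have "braid1 b 1 x = tmap 1 1 id id (tmap 2 0 b id x)" by (simp only: braid1_1_eq comp_apply)
  also have "\<dots> = tmap 1 1 id id (b x)" by (simp only: tmap_n_0[OF hb x])
  also have "\<dots> = b x" using bi x by (intro tmap_id_id2[where n=2]) auto
  finally show ?thesis .
qed

lemma braid1_1_lin: "lin_on (Tn 2) (braid1 b 1)"
  apply (rule lin_on_cong[OF hb])
   apply (erule braid1_1[symmetric])
  apply (erule (1) Tn_closed)
  done

lemma braid1_2: assumes x: "x \<in> Tn 3" shows "braid1 b 2 x = tmap 1 2 id b (tmap 2 1 b id x)"
proof -
  have "braid1 b 2 x = tmap 1 2 id (braid1 b 1) (tmap 2 1 b id x)" by (simp only: braid1_2_eq comp_apply)
  also have "\<dots> = tmap 1 2 id b (tmap 2 1 b id x)"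
    apply (rule tmap_cong[OF lin_on_id braid1_1_lin lin_on_id hb])
      apply (rule refl)
     apply (erule braid1_1)
    apply (rule T3)
    using s1_img x by blast
  finally show ?thesis .
qed

lemma braid_1_1: assumes y: "y \<in> Tn 2" shows "braid b 1 1 y = b y"
proof -
  have "braid b 1 1 y = tmap 1 1 id id (tmap 0 2 id (braid1 b 1) y)" by (simp only: braid_1_1_eq comp_apply)
  also have "\<dots> = tmap 1 1 id id (b y)" by (simp only: tmap_0_n[OF braid1_1_lin y] braid1_1[OF y])
  also have "\<dots> = b y" using bi y by (intro tmap_id_id2[where n=2]) auto
  finally show ?thesis .
qed

lemma braid_1_1_lin: "lin_on (Tn 2) (braid b 1 1)"
  apply (rule lin_on_cong[OF hb])
   apply (erule braid_1_1[symmetric])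
  apply (erule (1) Tn_closed)
  done

lemma braid_2_1: assumes x: "x \<in> Tn 3" shows "braid b 2 1 x = tmap 2 1 b id (tmap 1 2 id b x)"
proof -
  have "braid b 2 1 x = tmap 2 1 (braid b 1 1) id (tmap 1 2 id (braid1 b 1) x)" by (simp only: braid_2_1_eq comp_apply)
  also have "tmap 1 2 id (braid1 b 1) x = tmap 1 2 id b x"
    apply (rule tmap_cong[OF lin_on_id braid1_1_lin lin_on_id hb])
      apply (rule refl)
     apply (erule braid1_1)
    by (rule T3[OF x])
  also have "tmap 2 1 (braid b 1 1) id (tmap 1 2 id b x) = tmap 2 1 b id (tmap 1 2 id b x)"
    apply (rule tmap_cong[OF braid_1_1_lin lin_on_id hb lin_on_id])
      apply (erule braid_1_1)
     apply (rule refl)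
    apply (rule T3')
    using s2_img x by blast
  finally show ?thesis .
qed

lemma T4: "x \<in> Tn 4 \<Longrightarrow> x \<in> Tn (1 + 3)" and T4': "x \<in> Tn 4 \<Longrightarrow> x \<in> Tn (3 + 1)"
  and T4'': "x \<in> Tn 4 \<Longrightarrow> x \<in> Tn (2 + 2)"
  by (simp_all add: numeral_eq_Suc)

lemma lin_scale: "lin_on (Tn n) f \<Longrightarrow> x \<in> Tn n \<Longrightarrow> f (a *\<^sub>C x) = a *\<^sub>C f x"
  unfolding lin_on_def by blast

lemma P6K:
  fixes K L :: "'v tens \<Rightarrow> complex"
  assumes K: "lin_on (Tn 2) K" and L: "lin_on (Tn 2) L" and inv: "beta_inv b 2 0 (scal K)" and z: "z \<in> Tn 4"
  shows "ftmap 2 2 K L (tmap 1 3 id (tmap 2 1 b id) (tmap 2 2 b id (tmap 2 2 id b (tmap 1 3 id (tmap 2 1 b id) z))))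
       = ftmap 2 2 L K z"
proof -
  define s1 where "s1 = tmap 2 1 b id"
  define s2 where "s2 = tmap 1 2 id b"
  define I where "I = tmap 2 1 (scal K) id"
  define J where "J = tmap 1 2 id (scal K)"
  have sK: "lin_on (Tn 2) (scal K)" by (rule lin_on_scal[OF K])
  have ls1: "lin_on (Tn n) s1" for n unfolding s1_def by (rule lin_on_tmap[OF hb lin_on_id])
  have ls2: "lin_on (Tn n) s2" for n unfolding s2_def by (rule lin_on_tmap[OF lin_on_id hb])
  have lI: "lin_on (Tn n) I" for n unfolding I_def by (rule lin_on_tmap[OF sK lin_on_id])
  have lJ: "lin_on (Tn n) J" for n unfolding J_def by (rule lin_on_tmap[OF lin_on_id sK])
  have is1: "s1 ` Tn 3 \<subseteq> Tn 3" unfolding s1_def by (rule s1_img)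
  have is2: "s2 ` Tn 3 \<subseteq> Tn 3" unfolding s2_def by (rule s2_img)
  have i12: "(s2 \<circ> s1) ` Tn 3 \<subseteq> Tn 3" using is1 is2 by (auto simp: image_subset_iff)
  have l12: "lin_on (Tn 3) (s2 \<circ> s1)" by (rule lin_on_comp[OF ls1 is1 ls2])
  have iI: "I ` Tn 3 \<subseteq> Tn 1" unfolding I_def by (rule tmap_img'[OF sK lin_on_id scal_Tn id_img[of 1]]) simp_all
  have iJ: "J ` Tn 3 \<subseteq> Tn 1" unfolding J_def by (rule tmap_img'[OF lin_on_id sK id_img[of 1] scal_Tn]) simp_all
  have lI12: "lin_on (Tn 3) (I \<circ> (s2 \<circ> s1))" by (rule lin_on_comp[OF l12 i12 lI])
  have hinv: "I ((s2 \<circ> s1) x) = J x" if x: "x \<in> Tn 3" for x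
  proof -
    have "tmap 2 1 (scal K) id (braid1 b 2 x) = braid1 b 0 (tmap 1 2 id (scal K) x)"
      using inv T3[OF x] unfolding beta_inv_def by blast
    then show ?thesis using braid1_2[OF x] by (simp add: I_def J_def s1_def s2_def braid1.simps(1))
  qed
  have hinv': "(I \<circ> (s2 \<circ> s1)) x = J x" if x: "x \<in> Tn 3" for x
    using hinv[OF x] by (simp only: comp_apply)
  have FK1: "ftmap 2 2 K L y = L (tmap 3 1 I id y)" if y: "y \<in> Tn 4" for y
  proof (rule Tn_ext[where \<sigma>=id and F="ftmap 2 2 K L" and G="\<lambda>y. L (tmap 3 1 I id y)", OF y])
    show "linT 4 id (ftmap 2 2 K L)" by (rule linT_ftmap[OF K L])
    have im: "tmap 3 1 I id ` Tn 4 \<subseteq> Tn 2" by (rule tmap_img'[OF lI lin_on_id iI id_img[of 1]]) simp_all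
    show "linT 4 id (\<lambda>y. L (tmap 3 1 I id y))"
      unfolding linT_def using im by (auto simp: tmap_lin lI lin_on_id lin_on_app[OF L] image_subset_iff)
    fix w :: "'v list" assume "length w = 4"
    then obtain a1 a2 a3 a4 where w: "w = [a1, a2, a3, a4]" using len4 by blast
    show "ftmap 2 2 K L (tw w) = L (tmap 3 1 I id (tw w))"
      by (simp add: w ftmap_tw K L tmap_tw I_def sK lin_on_tmap lin_on_id tmul_scale_left tmul_tw lin_scale[OF L] Tn_tw)
  qed
  have FK2: "L (tmap 1 3 id J y) = ftmap 2 2 L K y" if y: "y \<in> Tn 4" for y
  proof (rule Tn_ext[where \<sigma>=id and G="ftmap 2 2 L K" and F="\<lambda>y. L (tmap 1 3 id J y)", OF y])
    show "linT 4 id (ftmap 2 2 L K)" by (rule linT_ftmap[OF L K])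
    have im: "tmap 1 3 id J ` Tn 4 \<subseteq> Tn 2" by (rule tmap_img'[OF lin_on_id lJ id_img[of 1] iJ]) simp_all
    show "linT 4 id (\<lambda>y. L (tmap 1 3 id J y))"
      unfolding linT_def using im by (auto simp: tmap_lin lJ lin_on_id lin_on_app[OF L] image_subset_iff)
    fix w :: "'v list" assume "length w = 4"
    then obtain a1 a2 a3 a4 where w: "w = [a1, a2, a3, a4]" using len4 by blast
    show "L (tmap 1 3 id J (tw w)) = ftmap 2 2 L K (tw w)"
      by (simp add: w ftmap_tw K L tmap_tw J_def sK lin_on_tmap lin_on_id tmul_scale_right tmul_tw lin_scale[OF L] Tn_tw)
  qed
  define z1 where "z1 = tmap 1 3 id s1 z"
  have z1: "z1 \<in> Tn 4" using B2_img z unfolding z1_def s1_def by blast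
  define z2 where "z2 = tmap 1 3 id (s2 \<circ> s1) z"
  have A: "tmap 2 2 id b z1 = z2"
  proof -
    have "tmap 2 2 id b z1 = tmap 1 3 id s2 z1" unfolding s2_def by (rule R2[OF hb z1])
    also have "\<dots> = tmap 1 3 (id \<circ> id) (s2 \<circ> s1) z"
      unfolding z1_def by (rule tmap_comp[OF lin_on_id ls2 lin_on_id ls1 id_img is1 T4[OF z]])
    finally show ?thesis by (simp add: z2_def)
  qed
  have z2: "z2 \<in> Tn 4" using A B3_img z1 by blast
  have C: "tmap 1 3 id (tmap 2 1 b id) (tmap 2 2 b id z2) = tmap 3 1 (s2 \<circ> s1) id z2"
  proof -
    have z3: "tmap 2 2 b id z2 \<in> Tn 4" using B1_img z2 by blast
    have "tmap 2 2 b id z2 = tmap 3 1 s1 id z2" unfolding s1_def by (rule R1[OF hb z2])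
    moreover have "tmap 1 3 id (tmap 2 1 b id) (tmap 2 2 b id z2) = tmap 3 1 s2 id (tmap 2 2 b id z2)"
      unfolding s2_def by (rule R3[OF hb z3])
    ultimately have "tmap 1 3 id (tmap 2 1 b id) (tmap 2 2 b id z2) = tmap 3 1 s2 id (tmap 3 1 s1 id z2)" by simp
    also have "\<dots> = tmap 3 1 (s2 \<circ> s1) (id \<circ> id) z2"
      by (rule tmap_comp[OF ls2 lin_on_id ls1 lin_on_id is1 id_img T4'[OF z2]])
    finally show ?thesis by simp
  qed
  have zz: "tmap 3 1 (s2 \<circ> s1) id z2 \<in> Tn 4"
  proof -
    have "tmap 3 1 (s2 \<circ> s1) id ` Tn 4 \<subseteq> Tn 4" by (rule tmap_img'[OF l12 lin_on_id i12 id_img[of 1]]) simp_all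
    then show ?thesis using z2 by blast
  qed
  have "ftmap 2 2 K L (tmap 1 3 id (tmap 2 1 b id) (tmap 2 2 b id (tmap 2 2 id b (tmap 1 3 id (tmap 2 1 b id) z))))
      = ftmap 2 2 K L (tmap 3 1 (s2 \<circ> s1) id z2)"
  proof -
    have "tmap 1 3 id (tmap 2 1 b id) z = z1" by (simp only: z1_def s1_def)
    then show ?thesis by (simp only: A C)
  qed
  also have "\<dots> = L (tmap 3 1 I id (tmap 3 1 (s2 \<circ> s1) id z2))" by (rule FK1[OF zz])
  also have "tmap 3 1 I id (tmap 3 1 (s2 \<circ> s1) id z2) = tmap 3 1 (I \<circ> (s2 \<circ> s1)) (id \<circ> id) z2"
    by (rule tmap_comp[OF lI lin_on_id l12 lin_on_id i12 id_img T4'[OF z2]])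
  also have "\<dots> = tmap 3 1 J id z2"
    apply (rule tmap_cong[OF lI12 _ lJ lin_on_id _ _ T4'[OF z2]])
      apply (simp add: lin_on_def)
     apply (erule hinv')
    apply simp
    done
  also have "\<dots> = tmap 1 3 id I z2" unfolding I_def J_def by (rule R3[OF sK z2, symmetric])
  also have "\<dots> = tmap 1 3 (id \<circ> id) (I \<circ> (s2 \<circ> s1)) z"
    unfolding z2_def by (rule tmap_comp[OF lin_on_id lI lin_on_id l12 id_img i12 T4[OF z]])
  also have "\<dots> = tmap 1 3 id J z"
    apply (rule tmap_cong[OF _ lI12 lin_on_id lJ _ _ T4[OF z]])
      apply (simp add: lin_on_def)
     apply simp
    apply (erule hinv')
    done
  also have "L \<dots> = ftmap 2 2 L K z" by (rule FK2[OF z])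
  finally show ?thesis .
qed

lemma P6L:
  fixes K L :: "'v tens \<Rightarrow> complex"
  assumes K: "lin_on (Tn 2) K" and L: "lin_on (Tn 2) L" and inv: "beta_inv_inv b 2 0 (scal L)" and z: "z \<in> Tn 4"
  shows "ftmap 2 2 K L (tmap 1 3 id (tmap 2 1 b id) (tmap 2 2 b id (tmap 2 2 id b (tmap 1 3 id (tmap 2 1 b id) z))))
       = ftmap 2 2 L K z"
proof -
  define s1 where "s1 = tmap 2 1 b id"
  define s2 where "s2 = tmap 1 2 id b"
  define I where "I = tmap 2 1 (scal L) id"
  define J where "J = tmap 1 2 id (scal L)"
  have ii: "(id::'v tens \<Rightarrow> 'v tens) \<circ> id = id" by simp
  have sL: "lin_on (Tn 2) (scal L)" by (rule lin_on_scal[OF L])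
  have ls1: "lin_on (Tn n) s1" for n unfolding s1_def by (rule lin_on_tmap[OF hb lin_on_id])
  have ls2: "lin_on (Tn n) s2" for n unfolding s2_def by (rule lin_on_tmap[OF lin_on_id hb])
  have lI: "lin_on (Tn n) I" for n unfolding I_def by (rule lin_on_tmap[OF sL lin_on_id])
  have lJ: "lin_on (Tn n) J" for n unfolding J_def by (rule lin_on_tmap[OF lin_on_id sL])
  have is1: "s1 ` Tn 3 \<subseteq> Tn 3" unfolding s1_def by (rule s1_img)
  have is2: "s2 ` Tn 3 \<subseteq> Tn 3" unfolding s2_def by (rule s2_img)
  have i12: "(s1 \<circ> s2) ` Tn 3 \<subseteq> Tn 3" using is1 is2 by (auto simp: image_subset_iff)
  have l12: "lin_on (Tn 3) (s1 \<circ> s2)" by (rule lin_on_comp[OF ls2 is2 ls1])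
  have iI: "I ` Tn 3 \<subseteq> Tn 1" unfolding I_def by (rule tmap_img'[OF sL lin_on_id scal_Tn id_img[of 1]]) simp_all
  have iJ: "J ` Tn 3 \<subseteq> Tn 1" unfolding J_def by (rule tmap_img'[OF lin_on_id sL id_img[of 1] scal_Tn]) simp_all
  have lJ12: "lin_on (Tn 3) (J \<circ> (s1 \<circ> s2))" by (rule lin_on_comp[OF l12 i12 lJ])
  have hinv: "J ((s1 \<circ> s2) x) = I x" if x: "x \<in> Tn 3" for x
  proof -
    have "tmap 1 2 id (scal L) (braid b 2 1 x) = braid b 0 1 (tmap 2 1 (scal L) id x)"
      using inv T3'[OF x] unfolding beta_inv_inv_def by blast
    then show ?thesis using braid_2_1[OF x] by (simp add: I_def J_def s1_def s2_def braid.simps(1))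
  qed
  have hinv': "(J \<circ> (s1 \<circ> s2)) x = I x" if x: "x \<in> Tn 3" for x
    using hinv[OF x] by (simp only: comp_apply)
  have FL1: "ftmap 2 2 K L y = K (tmap 1 3 id J y)" if y: "y \<in> Tn 4" for y
  proof (rule Tn_ext[where \<sigma>=id and F="ftmap 2 2 K L" and G="\<lambda>y. K (tmap 1 3 id J y)", OF y])
    show "linT 4 id (ftmap 2 2 K L)" by (rule linT_ftmap[OF K L])
    have im: "tmap 1 3 id J ` Tn 4 \<subseteq> Tn 2" by (rule tmap_img'[OF lin_on_id lJ id_img[of 1] iJ]) simp_all
    show "linT 4 id (\<lambda>y. K (tmap 1 3 id J y))"
      unfolding linT_def using im by (auto simp: tmap_lin lJ lin_on_id lin_on_app[OF K] image_subset_iff)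
    fix w :: "'v list" assume "length w = 4"
    then obtain a1 a2 a3 a4 where w: "w = [a1, a2, a3, a4]" using len4 by blast
    show "ftmap 2 2 K L (tw w) = K (tmap 1 3 id J (tw w))"
      by (simp add: w ftmap_tw K L tmap_tw J_def sL lin_on_tmap lin_on_id tmul_scale_right tmul_tw lin_scale[OF K] Tn_tw mult.commute)
  qed
  have FL2: "K (tmap 3 1 I id y) = ftmap 2 2 L K y" if y: "y \<in> Tn 4" for y
  proof (rule Tn_ext[where \<sigma>=id and G="ftmap 2 2 L K" and F="\<lambda>y. K (tmap 3 1 I id y)", OF y])
    show "linT 4 id (ftmap 2 2 L K)" by (rule linT_ftmap[OF L K])
    have im: "tmap 3 1 I id ` Tn 4 \<subseteq> Tn 2" by (rule tmap_img'[OF lI lin_on_id iI id_img[of 1]]) simp_all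
    show "linT 4 id (\<lambda>y. K (tmap 3 1 I id y))"
      unfolding linT_def using im by (auto simp: tmap_lin lI lin_on_id lin_on_app[OF K] image_subset_iff)
    fix w :: "'v list" assume "length w = 4"
    then obtain a1 a2 a3 a4 where w: "w = [a1, a2, a3, a4]" using len4 by blast
    show "K (tmap 3 1 I id (tw w)) = ftmap 2 2 L K (tw w)"
      by (simp add: w ftmap_tw K L tmap_tw I_def sL lin_on_tmap lin_on_id tmul_scale_left tmul_tw lin_scale[OF K] Tn_tw)
  qed
  define z1 where "z1 = tmap 1 3 id s1 z"
  have z1: "z1 \<in> Tn 4" using B2_img z unfolding z1_def s1_def by blast
  have z1': "z1 = tmap 3 1 s2 id z" unfolding z1_def s1_def s2_def by (rule R3[OF hb z])
  have comm: "tmap 2 2 b id (tmap 2 2 id b z1) = tmap 2 2 id b (tmap 2 2 b id z1)"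
  proof -
    have "tmap 2 2 b id (tmap 2 2 id b z1) = tmap 2 2 (b \<circ> id) (id \<circ> b) z1"
      by (rule tmap_comp[OF hb lin_on_id lin_on_id hb id_img bi T4''[OF z1]])
    also have "\<dots> = tmap 2 2 (id \<circ> b) (b \<circ> id) z1" by simp
    also have "\<dots> = tmap 2 2 id b (tmap 2 2 b id z1)"
      by (rule tmap_comp[OF lin_on_id hb hb lin_on_id bi id_img T4''[OF z1], symmetric])
    finally show ?thesis .
  qed
  define u where "u = tmap 3 1 (s1 \<circ> s2) id z"
  have U: "tmap 2 2 b id z1 = u"
  proof -
    have "tmap 2 2 b id z1 = tmap 3 1 s1 id z1" unfolding s1_def by (rule R1[OF hb z1])
    also have "\<dots> = tmap 3 1 (s1 \<circ> s2) (id \<circ> id) z"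
      unfolding z1' by (rule tmap_comp[OF ls1 lin_on_id ls2 lin_on_id is2 id_img T4'[OF z]])
    finally show ?thesis by (simp only: ii u_def)
  qed
  have u: "u \<in> Tn 4" using U B1_img z1 by blast
  have "ftmap 2 2 K L (tmap 1 3 id (tmap 2 1 b id) (tmap 2 2 b id (tmap 2 2 id b (tmap 1 3 id (tmap 2 1 b id) z))))
      = ftmap 2 2 K L (tmap 1 3 id s1 (tmap 2 2 id b u))"
  proof -
    have "tmap 1 3 id (tmap 2 1 b id) z = z1" by (simp only: z1_def s1_def)
    then show ?thesis by (simp only: comm U s1_def)
  qed
  also have "tmap 2 2 id b u = tmap 1 3 id s2 u" unfolding s2_def by (rule R2[OF hb u])
  also have "tmap 1 3 id s1 (tmap 1 3 id s2 u) = tmap 1 3 (id \<circ> id) (s1 \<circ> s2) u"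
    by (rule tmap_comp[OF lin_on_id ls1 lin_on_id ls2 id_img is2 T4[OF u]])
  also have "\<dots> = tmap 1 3 id (s1 \<circ> s2) u" by (simp only: ii)
  also have "ftmap 2 2 K L \<dots> = K (tmap 1 3 id J (tmap 1 3 id (s1 \<circ> s2) u))"
  proof (rule FL1)
    have "tmap 1 3 id (s1 \<circ> s2) ` Tn 4 \<subseteq> Tn 4" by (rule tmap_img'[OF lin_on_id l12 id_img[of 1] i12]) simp_all
    then show "tmap 1 3 id (s1 \<circ> s2) u \<in> Tn 4" using u by blast
  qed
  also have "tmap 1 3 id J (tmap 1 3 id (s1 \<circ> s2) u) = tmap 1 3 (id \<circ> id) (J \<circ> (s1 \<circ> s2)) u"
    by (rule tmap_comp[OF lin_on_id lJ lin_on_id l12 id_img i12 T4[OF u]])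
  also have "\<dots> = tmap 1 3 id I u"
    apply (rule tmap_cong[OF _ lJ12 lin_on_id lI _ _ T4[OF u]])
      apply (simp add: lin_on_def)
     apply simp
    apply (erule hinv')
    done
  also have "\<dots> = tmap 3 1 J id u" unfolding I_def J_def by (rule R3[OF sL u])
  also have "\<dots> = tmap 3 1 (J \<circ> (s1 \<circ> s2)) (id \<circ> id) z"
    unfolding u_def by (rule tmap_comp[OF lJ lin_on_id l12 lin_on_id i12 id_img T4'[OF z]])
  also have "\<dots> = tmap 3 1 I id z"
    apply (rule tmap_cong[OF lJ12 _ lI lin_on_id _ _ T4'[OF z]])
      apply (simp add: lin_on_def)
     apply (erule hinv')
    apply simp
    done
  also have "K \<dots> = ftmap 2 2 L K z" by (rule FL2[OF z])
  finally show ?thesis .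
qed

lemma Tn_eq: "x \<in> Tn n \<Longrightarrow> n = m \<Longrightarrow> x \<in> Tn m" by simp

lemma P4:
  assumes a: "antilin st" and hS: "\<And>y. y \<in> Tn 2 \<Longrightarrow> b (Sg st (b y)) = Sg st y" and z: "z \<in> Tn 4"
  shows "tmap 1 3 id (tmap 2 1 b id) (Sg st (tmap 1 3 id (tmap 2 1 b id) z)) = Sg st z"
proof (rule Tn_ext[where \<sigma>=cnj and F="\<lambda>z. tmap 1 3 id (tmap 2 1 b id) (Sg st (tmap 1 3 id (tmap 2 1 b id) z))" and G="Sg st", OF z])
  show "linT 4 cnj (\<lambda>z. tmap 1 3 id (tmap 2 1 b id) (Sg st (tmap 1 3 id (tmap 2 1 b id) z)))"
    unfolding linT_def by (simp add: tmap_lin lin_on_tmap hb lin_on_id Sg_lin[OF a])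
  show "linT 4 cnj (Sg st)" by (rule linT_Sg[OF a])
  fix w :: "'v list" assume "length w = 4"
  then obtain a1 a2 a3 a4 where w: "w = [a1, a2, a3, a4]" using len4 by blast
  define Q where "Q = b (tw [a2, a3])"
  have Q: "Q \<in> Tn 2" unfolding Q_def using bi Tn_tw[of "[a2, a3]" 2] by auto
  have SQ: "Sg st Q \<in> Tn 2" by (rule Sg_Tn[OF a Q])
  have e1: "tmap 1 3 id (tmap 2 1 b id) (tw w) = tmul (tw [a1]) (tmul Q (tw [a4]))"
    by (simp add: w Q_def tmap_tw hb lin_on_id lin_on_tmap)
  have t1: "tw [a1] \<in> Tn 1" by (rule Tn_tw) simp
  have tQ: "tmul Q (tw [a4]) \<in> Tn (2 + 1)" by (rule tmul_Tn[OF Q]) (rule Tn_tw, simp)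
  have e2: "Sg st (tmul (tw [a1]) (tmul Q (tw [a4]))) = tmul (tw [st a4]) (tmul (Sg st Q) (tw [st a1]))"
    using Sg_tmul[OF a Q Tn_tw[of "[a4]" 1]] by (simp add: Sg_tmul[OF a t1 tQ] Sg_tw[OF a] tmul_assoc)
  have tSQ: "tmul (Sg st Q) (tw [st a1]) \<in> Tn 3"
    by (rule Tn_eq[OF tmul_Tn[OF SQ]]) (rule Tn_tw, simp_all)
  have t4: "tw [st a4] \<in> Tn 1" by (rule Tn_tw) simp
  have t1': "tw [st a1] \<in> Tn 1" by (rule Tn_tw) simp
  have e3: "tmap 1 3 id (tmap 2 1 b id) (tmul (tw [st a4]) (tmul (Sg st Q) (tw [st a1])))
      = tmul (tw [st a4]) (tmul (b (Sg st Q)) (tw [st a1]))"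
    by (simp only: tmap_tmul[OF lin_on_id s1_lin t4 tSQ] tmap_tmul[OF hb lin_on_id SQ t1'] id_apply)
  have e4: "b (Sg st Q) = tw [st a3, st a2]" unfolding Q_def
    by (simp add: hS Tn_tw Sg_tw[OF a])
  show "tmap 1 3 id (tmap 2 1 b id) (Sg st (tmap 1 3 id (tmap 2 1 b id) (tw w))) = Sg st (tw w)"
    by (simp only: e1 e2 e3 e4) (simp add: tmul_tw Sg_tw[OF a] w)
qed

end


lemma P5:
  fixes K L :: "'v::complex_vector tens \<Rightarrow> complex"
  assumes a: "antilin st" and K: "lin_on (Tn 2) K" and L: "lin_on (Tn 2) L"
    and hK: "hermitian st K" and hL: "hermitian st L" and z: "z \<in> Tn 4"
  shows "ftmap 2 2 L K (Sg st z) = cnj (ftmap 2 2 K L z)"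
proof (rule Tn_ext[where \<sigma>=cnj and F="\<lambda>z. ftmap 2 2 L K (Sg st z)" and G="\<lambda>z. cnj (ftmap 2 2 K L z)", OF z])
  show "linT 4 cnj (\<lambda>z. ftmap 2 2 L K (Sg st z))"
    unfolding linT_def by (simp add: Sg_lin[OF a] ftmap_lin[OF L K])
  show "linT 4 cnj (\<lambda>z. cnj (ftmap 2 2 K L z))"
    unfolding linT_def by (simp add: ftmap_lin[OF K L])
  fix w :: "'v list" assume "length w = 4"
  then obtain a1 a2 a3 a4 where w: "w = [a1, a2, a3, a4]" using len4 by blast
  show "ftmap 2 2 L K (Sg st (tw w)) = cnj (ftmap 2 2 K L (tw w))"
    using hK hL unfolding hermitian_def by (simp add: w Sg_tw[OF a] ftmap_tw K L mult.commute)
qed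

theorem mainTheorem1:
  fixes D :: "'c::complex_vector tens \<Rightarrow> 'c tens" and e :: "'c tens \<Rightarrow> complex"
    and b :: "'c tens \<Rightarrow> 'c tens" and st :: "'c \<Rightarrow> 'c"
    and K L :: "'c tens \<Rightarrow> complex"
  assumes "braided_star_coalgebra D e b st"
    and "lin_on (Tn 2) K" and "lin_on (Tn 2) L"
    and "hermitian st K" and "hermitian st L"
    and "beta_inv b 2 0 (scal K) \<or> beta_inv_inv b 2 0 (scal L)"
  shows "hermitian st (conv b D K L)"
proof -
  note K = assms(2) and L = assms(3)
  have bc: "braided_coalgebra D e b" and a: "antilin st"
    and Dst: "\<And>c. D (tw [st c]) = b (sflip st (D (tw [c])))"
    and inv: "\<And>x. x \<in> Tn 2 \<Longrightarrow> b (sflip st x) = sflip st (inv_into (Tn 2) b x)"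
    using assms(1) unfolding braided_star_coalgebra_def antilin_def by auto
  have hb: "lin_on (Tn 2) b" and bij: "bij_betw b (Tn 2) (Tn 2)"
    and hD: "lin_on (Tn 1) D" and Di: "D ` Tn 1 \<subseteq> Tn 2"
    using bc unfolding braided_coalgebra_def braiding_def by auto
  have bi: "b ` Tn 2 \<subseteq> Tn 2" using bij by (simp add: bij_betw_def)
  have hS: "b (Sg st (b y)) = Sg st y" if y: "y \<in> Tn 2" for y
  proof -
    have hby: "b y \<in> Tn 2" using bi y by blast
    have "b (sflip st (b y)) = sflip st (inv_into (Tn 2) b (b y))" by (rule inv[OF hby])
    also have "inv_into (Tn 2) b (b y) = y" by (rule bij_betw_inv_into_left[OF bij y])
    finally show ?thesis using sflip_eq[OF a hby] sflip_eq[OF a y] by simp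
  qed
  define B2 where "B2 = tmap 1 3 id (tmap 2 1 b id)"
  have Lam: "conv b D K L (tw [x, y]) = ftmap 2 2 K L (B2 (tmul (D (tw [x])) (D (tw [y]))))" for x y
  proof -
    have "tmap 1 1 D D (tw [x, y]) = tmul (D (tw [x])) (D (tw [y]))"
      using tmap_tw[OF hD hD, of "[x, y]"] by simp
    then show ?thesis by (simp only: conv_def Lam_def B2_def comp_apply)
  qed
  show ?thesis unfolding hermitian_def
  proof (intro allI)
    fix x y :: 'c
    define X where "X = D (tw [x])"
    define Y where "Y = D (tw [y])"
    have X: "X \<in> Tn 2" unfolding X_def using Di Tn_tw[of "[x]" 1] by auto
    have Y: "Y \<in> Tn 2" unfolding Y_def using Di Tn_tw[of "[y]" 1] by auto
    have SX: "Sg st X \<in> Tn 2" by (rule Sg_Tn[OF a X])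
    have SY: "Sg st Y \<in> Tn 2" by (rule Sg_Tn[OF a Y])
    have bSY: "b (Sg st Y) \<in> Tn 2" using bi SY by blast
    define W0 where "W0 = tmul Y X"
    have W0: "W0 \<in> Tn 4" unfolding W0_def by (rule Tn_eq[OF hb bi tmul_Tn[OF Y X]]) simp
    define W where "W = B2 W0"
    have W: "W \<in> Tn 4" unfolding W_def B2_def using B2_img[OF hb bi] W0 by blast
    have SW: "Sg st W \<in> Tn 4" by (rule Sg_Tn[OF a W])
    have "conv b D K L (tw [st x, st y]) = ftmap 2 2 K L (B2 (tmul (b (Sg st X)) (b (Sg st Y))))"
      by (simp only: Lam Dst X_def Y_def sflip_eq[OF a X[unfolded X_def]] sflip_eq[OF a Y[unfolded Y_def]])
    also have "tmul (b (Sg st X)) (b (Sg st Y)) = tmap 2 2 b id (tmap 2 2 id b (tmul (Sg st X) (Sg st Y)))"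
      by (simp only: tmap_tmul[OF lin_on_id hb SX SY] tmap_tmul[OF hb lin_on_id SX bSY] id_apply)
    also have "tmul (Sg st X) (Sg st Y) = Sg st W0" unfolding W0_def by (rule Sg_tmul[OF a Y X, symmetric])
    also have "Sg st W0 = B2 (Sg st W)" unfolding W_def B2_def by (rule P4[OF hb bi a hS W0, symmetric])
    also have "ftmap 2 2 K L (B2 (tmap 2 2 b id (tmap 2 2 id b (B2 (Sg st W))))) = ftmap 2 2 L K (Sg st W)"
      unfolding B2_def using assms(6) P6K[OF hb bi K L _ SW] P6L[OF hb bi K L _ SW] by blast
    also have "\<dots> = cnj (ftmap 2 2 K L W)" by (rule P5[OF a K L assms(4,5) W])
    also have "ftmap 2 2 K L W = conv b D K L (tw [y, x])" by (simp only: Lam W_def W0_def X_def Y_def)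
    finally show "conv b D K L (tw [st x, st y]) = cnj (conv b D K L (tw [y, x]))" .
  qed
qed

end
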